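(* Let $S_1,S_2\subseteq\mathbb{F}_q$ with $\#S_1=\#S_2=s$, let $\sigma\in\{0,\dots,s-1\}$, and let $\ell$ be a positive integer with $\ell\le\sigma+1$ such that $\ell$ is even if and only if $\sigma$ is odd. Then: (1) There exist $L_2\subsetneq L_1\subseteq\Delta(s,s)$ (namely those of the form $L_1=\{N\mid N\preceq_{\deg}X^iY^j\}$, $L_2=\{N\mid N\prec_{\deg}X^jY^i\}$ with $i=\frac{\sigma-\ell+1}{2}$, $j=\frac{\sigma+\ell-1}{2}$) with $\#L_1-\#L_2=\ell$ and $$M_1(C(L_1),C(L_2))=\Big(s-\tfrac{\sigma-\ell+1}{2}\Big)\Big(s-\tfrac{\sigma+\ell-1}{2}\Big),\quad M_1(C(L_2)^\perp,C(L_1)^\perp)\ge\Big(\tfrac{\sigma-\ell+3}{2}\Big)\Big(\tfrac{\sigma+\ell+1}{2}\Big),$$ and if $\ell\le\sigma-1$ then $d(C(L_1))=s(s-\sigma)<M_1(C(L_1),C(L_2))$. (2) There exist $L_2\subsetneq L_1\subseteq\Delta(s,s)$ with $\#L_1-\#L_2=\ell$ and $$M_1(C(L_1),C(L_2))=\Big(\tfrac{\sigma-\ell+3}{2}\Big)\Big(\tfrac{\sigma+\ell+1}{2}\Big),\quad M_1(C(L_2)^\perp,C(L_1)^\perp)\ge\Big(s-\tfrac{\sigma-\ell+1}{2}\Big)\Big(s-\tfrac{\sigma+\ell-1}{2}\Big),$$ and if $\ell\le\sigma-1$ then $d(C(L_1))=\sigma+1<M_1(C(L_1),C(L_2))$.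
   Context: $q$ is a prime power. $S_1\times S_2=\{\alpha_1,\dots,\alpha_n\}$, $n=s^2$. $\Delta(s,s)=\{X^aY^b\mid 0\le a,b<s\}$. For $L\subseteq\Delta(s,s)$, $C(L)\subseteq\mathbb{F}_q^n$ is the span of $(N(\alpha_1),\dots,N(\alpha_n))$, $N\in L$; $C^\perp$ is the Euclidean dual; $d(C)$ is the minimum Hamming distance. $\prec_{\deg}$: $X^aY^b\prec_{\deg}X^cY^d$ iff $a+b<c+d$, or $a+b=c+d$ and $b<d$. For linear codes $C_2\subsetneq C_1$, $M_1(C_1,C_2)=\min\{w_H(\vec c)\mid \vec c\in C_1\setminus C_2\}$. *)

theory Defs
  imports Main
begin

(* Monomials X^a Y^b are represented by their exponent pairs (a,b). *)
definition Delta :: "nat \<Rightarrow> (nat \<times> nat) set" where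
  "Delta s = {(a, b). a < s \<and> b < s}"

definition deg_less :: "nat \<times> nat \<Rightarrow> nat \<times> nat \<Rightarrow> bool" where
  "deg_less N M \<longleftrightarrow> fst N + snd N < fst M + snd M
     \<or> (fst N + snd N = fst M + snd M \<and> snd N < snd M)"

definition deg_le :: "nat \<times> nat \<Rightarrow> nat \<times> nat \<Rightarrow> bool" where
  "deg_le N M \<longleftrightarrow> deg_less N M \<or> N = M"

(* Vectors of F_q^n, indexed by the points of S1 \<times> S2, are functions that vanish
   outside S1 \<times> S2. *)
definition ambient :: "'a set \<Rightarrow> 'a set \<Rightarrow> ('a \<times> 'a \<Rightarrow> 'b::zero) set" where
  "ambient S1 S2 = {v. \<forall>p. p \<notin> S1 \<times> S2 \<longrightarrow> v p = 0}"

definition evcode :: "'a::field set \<Rightarrow> 'a set \<Rightarrow> (nat \<times> nat) set \<Rightarrow> ('a \<times> 'a \<Rightarrow> 'a) set" where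
  "evcode S1 S2 L = {c. \<exists>f :: nat \<times> nat \<Rightarrow> 'a.
      c = (\<lambda>p. if p \<in> S1 \<times> S2
               then (\<Sum>m\<in>L. f m * fst p ^ fst m * snd p ^ snd m) else 0)}"

definition dual :: "'a::field set \<Rightarrow> 'a set \<Rightarrow> ('a \<times> 'a \<Rightarrow> 'a) set \<Rightarrow> ('a \<times> 'a \<Rightarrow> 'a) set" where
  "dual S1 S2 C = {v \<in> ambient S1 S2. \<forall>c\<in>C. (\<Sum>p\<in>S1 \<times> S2. v p * c p) = 0}"

definition hweight :: "'a set \<Rightarrow> 'a set \<Rightarrow> ('a \<times> 'a \<Rightarrow> 'b::zero) \<Rightarrow> nat" where
  "hweight S1 S2 c = card {p \<in> S1 \<times> S2. c p \<noteq> 0}"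

definition min_dist :: "'a set \<Rightarrow> 'a set \<Rightarrow> ('a \<times> 'a \<Rightarrow> 'b::zero) set \<Rightarrow> nat" where
  "min_dist S1 S2 C = Min (hweight S1 S2 ` (C - {\<lambda>_. 0}))"

definition M1 :: "'a set \<Rightarrow> 'a set \<Rightarrow> ('a \<times> 'a \<Rightarrow> 'b::zero) set \<Rightarrow> ('a \<times> 'a \<Rightarrow> 'b) set \<Rightarrow> nat" where
  "M1 S1 S2 C1 C2 = Min (hweight S1 S2 ` (C1 - C2))"

end

theory Submission
  imports Defs "HOL-Computational_Algebra.Polynomial"
begin

lemma prod_lin_expand:
  fixes A :: "'a::field set"
  assumes "finite A"
  shows "\<exists>\<gamma>. \<gamma> (card A) = 1 \<and> (\<forall>x. (\<Prod>u\<in>A. x - u) = (\<Sum>t\<le>card A. \<gamma> t * x ^ t))"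
proof -
  define Q where "Q = (\<Prod>u\<in>A. [:-u, 1:])"
  have dQ: "degree Q = card A"
    unfolding Q_def by (subst degree_prod_eq_sum_degree) auto
  have lQ: "coeff Q (card A) = 1"
    using lead_coeff_prod[of "\<lambda>u. [:-u, 1:]" A] dQ unfolding Q_def by simp
  have "\<forall>x. (\<Prod>u\<in>A. x - u) = (\<Sum>t\<le>card A. coeff Q t * x ^ t)"
  proof
    fix x
    have "poly Q x = (\<Prod>u\<in>A. x - u)" unfolding Q_def by (simp add: poly_prod)
    then show "(\<Prod>u\<in>A. x - u) = (\<Sum>t\<le>card A. coeff Q t * x ^ t)"
      using poly_altdef[of Q x] dQ by simp
  qed
  then show ?thesis using lQ by blast
qed

lemma uni_zero:
  fixes S :: "'a::field set"
  assumes "finite S" "card S = n" "\<forall>x\<in>S. (\<Sum>k<n. a k * x ^ k) = 0"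
  shows "\<forall>k<n. a k = 0"
proof -
  define p where "p = (\<Sum>k<n. monom (a k) k)"
  have pp: "poly p x = (\<Sum>k<n. a k * x ^ k)" for x
    unfolding p_def by (simp add: poly_sum poly_monom)
  have "p = 0"
  proof (rule ccontr)
    assume p0: "p \<noteq> 0"
    have "degree p < n \<or> n = 0"
    proof (cases n)
      case 0 then show ?thesis by simp
    next
      case (Suc m)
      have "degree p \<le> m" unfolding p_def
        by (rule degree_sum_le) (auto simp: Suc degree_monom_le intro: order.trans[OF degree_monom_le])
      then show ?thesis using Suc by simp
    qed
    moreover have "S \<subseteq> {x. poly p x = 0}" using assms(3) pp by auto
    then have "card S \<le> card {x. poly p x = 0}"
      by (intro card_mono poly_roots_finite p0)
    moreover have "card {x. poly p x = 0} \<le> degree p" by (rule card_poly_roots_bound[OF p0])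
    moreover have "n \<noteq> 0"
    proof
      assume "n = 0" then have "p = 0" unfolding p_def by simp
      with p0 show False by simp
    qed
    ultimately show False using assms(2) by linarith
  qed
  show ?thesis
  proof (intro allI impI)
    fix k assume k: "k < n"
    have "coeff p k = a k" unfolding p_def coeff_sum
      using k by (simp add: coeff_monom sum.delta)
    then show "a k = 0" using \<open>p = 0\<close> by simp
  qed
qed

definition key :: "nat \<times> nat \<Rightarrow> nat" where
  "key m = (fst m + snd m)^2 + snd m"

definition padd :: "nat \<times> nat \<Rightarrow> nat \<times> nat \<Rightarrow> nat \<times> nat" where
  "padd N M = (fst N + fst M, snd N + snd M)"

lemma deg_less_key: "deg_less N M \<Longrightarrow> key N < key M"
proof -
  assume h: "deg_less N M"
  obtain a b c d where N: "N = (a,b)" and M: "M = (c,d)" by (cases N, cases M) auto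
  show ?thesis
  proof (cases "a + b < c + d")
    case True
    have "(a+b)^2 + b < (a+b+1)^2" by (simp add: power2_eq_square)
    also have "(a+b+1)^2 \<le> (c+d)^2" using True by (intro power_mono) auto
    finally show ?thesis using N M by (simp add: key_def)
  next
    case False
    then show ?thesis using h N M by (auto simp: deg_less_def key_def)
  qed
qed

lemma deg_less_total: "N = M \<or> deg_less N M \<or> deg_less M N"
  by (cases N, cases M) (auto simp: deg_less_def)

lemma key_inj: "key N = key M \<Longrightarrow> N = M"
  using deg_less_total[of N M] deg_less_key[of N M] deg_less_key[of M N] by auto

lemma key_less_iff: "key N < key M \<longleftrightarrow> deg_less N M"
  using deg_less_total[of N M] deg_less_key[of N M] deg_less_key[of M N] by auto

lemma key_le_iff: "key N \<le> key M \<longleftrightarrow> deg_le N M"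
  unfolding deg_le_def using key_less_iff[of N M] key_inj[of N M] by auto

lemma key_deg_mono: "key N \<le> key M \<Longrightarrow> fst N + snd N \<le> fst M + snd M"
  using key_less_iff[of M N] by (auto simp: deg_less_def)

lemma key_less_comp: "key N < key M \<Longrightarrow> fst N < fst M \<or> snd N < snd M"
  using key_less_iff[of N M] by (auto simp: deg_less_def)

lemma key_padd_le: "key N \<le> key M \<Longrightarrow> key E \<le> key F \<Longrightarrow> key (padd N E) \<le> key (padd M F)"
  unfolding key_le_iff deg_le_def deg_less_def padd_def by auto

lemma key_padd_less1: "key N < key M \<Longrightarrow> key E \<le> key F \<Longrightarrow> key (padd N E) < key (padd M F)"
  unfolding key_le_iff key_less_iff deg_le_def deg_less_def padd_def by auto

lemma key_padd_less2: "key N \<le> key M \<Longrightarrow> key E < key F \<Longrightarrow> key (padd N E) < key (padd M F)"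
  unfolding key_le_iff key_less_iff deg_le_def deg_less_def padd_def by auto

lemma box_key_le: "fst N \<le> fst M \<Longrightarrow> snd N \<le> snd M \<Longrightarrow> key N \<le> key M"
  unfolding key_le_iff deg_le_def deg_less_def by (cases N, cases M) auto

lemma Delta_eq: "Delta s = {..<s} \<times> {..<s}"
  by (auto simp: Delta_def)

lemma dep:
  fixes \<phi> :: "'e \<Rightarrow> 'p \<Rightarrow> 'a::field"
  assumes "finite X" "finite E" "card X < card E"
  shows "\<exists>w. (\<exists>e\<in>E. w e \<noteq> 0) \<and> (\<forall>p\<in>X. (\<Sum>e\<in>E. w e * \<phi> e p) = 0)"
  using assms
proof (induction X arbitrary: E \<phi> rule: finite_induct)
  case empty
  then have "E \<noteq> {}" by auto
  then show ?case by (intro exI[of _ "\<lambda>_. 1"]) auto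
next
  case (insert p X)
  show ?case
  proof (cases "\<forall>e\<in>E. \<phi> e p = 0")
    case True
    from insert.IH[of E \<phi>] insert.prems insert.hyps obtain w where
      l: "\<exists>e\<in>E. w e \<noteq> 0" "\<forall>q\<in>X. (\<Sum>e\<in>E. w e * \<phi> e q) = 0" by auto
    then show ?thesis using True by (intro exI[of _ w]) auto
  next
    case False
    then obtain e0 where e0: "e0 \<in> E" "\<phi> e0 p \<noteq> 0" by auto
    define E' where "E' = E - {e0}"
    define \<psi> where "\<psi> e q = \<phi> e q - \<phi> e p / \<phi> e0 p * \<phi> e0 q" for e q
    have cE': "card X < card E'" unfolding E'_def using insert.prems insert.hyps e0 by auto
    from insert.IH[of E' \<psi>] cE' insert.prems obtain w where
      l: "\<exists>e\<in>E'. w e \<noteq> 0" "\<forall>q\<in>X. (\<Sum>e\<in>E'. w e * \<psi> e q) = 0" by (auto simp: E'_def)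
    define Sp where "Sp = (\<Sum>e\<in>E'. w e * \<phi> e p)"
    define \<mu> where "\<mu> e = (if e = e0 then - Sp / \<phi> e0 p else w e)" for e
    have split: "(\<Sum>e\<in>E. \<mu> e * \<phi> e q) = \<mu> e0 * \<phi> e0 q + (\<Sum>e\<in>E'. w e * \<phi> e q)" for q
    proof -
      have "(\<Sum>e\<in>E. \<mu> e * \<phi> e q) = \<mu> e0 * \<phi> e0 q + (\<Sum>e\<in>E'. \<mu> e * \<phi> e q)"
        unfolding E'_def using e0 insert.prems by (simp add: sum.remove)
      also have "(\<Sum>e\<in>E'. \<mu> e * \<phi> e q) = (\<Sum>e\<in>E'. w e * \<phi> e q)"
        by (rule sum.cong) (auto simp: \<mu>_def E'_def)
      finally show ?thesis .
    qed
    have "\<forall>q\<in>insert p X. (\<Sum>e\<in>E. \<mu> e * \<phi> e q) = 0"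
    proof
      fix q assume q: "q \<in> insert p X"
      show "(\<Sum>e\<in>E. \<mu> e * \<phi> e q) = 0"
      proof (cases "q = p")
        case True
        have "(\<Sum>e\<in>E. \<mu> e * \<phi> e q) = \<mu> e0 * \<phi> e0 p + Sp"
          unfolding split Sp_def True ..
        also have "\<mu> e0 = - Sp / \<phi> e0 p" by (simp add: \<mu>_def)
        finally show ?thesis using e0 by simp
      next
        case False
        with q have qX: "q \<in> X" by auto
        have "0 = (\<Sum>e\<in>E'. w e * \<psi> e q)" using l(2) qX by auto
        also have "\<dots> = (\<Sum>e\<in>E'. w e * \<phi> e q) - Sp / \<phi> e0 p * \<phi> e0 q"
          unfolding \<psi>_def Sp_def
          by (simp add: right_diff_distrib sum_subtractf sum_distrib_left sum_distrib_right sum_divide_distrib algebra_simps)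
        also have "\<dots> = (\<Sum>e\<in>E. \<mu> e * \<phi> e q)" unfolding split by (simp add: \<mu>_def)
        finally show ?thesis by simp
      qed
    qed
    moreover have "\<exists>e\<in>E. \<mu> e \<noteq> 0" using l(1) by (auto simp: \<mu>_def E'_def)
    ultimately show ?thesis by blast
  qed
qed

lemma pow_reduce:
  fixes S :: "'a::field set"
  assumes "finite S"
  shows "\<exists>\<alpha>. \<forall>x\<in>S. x ^ card S = (\<Sum>k<card S. \<alpha> k * x ^ k)"
proof -
  obtain \<gamma> where g: "\<gamma> (card S) = 1" "\<forall>x. (\<Prod>u\<in>S. x - u) = (\<Sum>t\<le>card S. \<gamma> t * x ^ t)"
    using prod_lin_expand[OF assms] by blast
  have "x ^ card S = (\<Sum>k<card S. (- \<gamma> k) * x ^ k)" if x: "x \<in> S" for x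
  proof -
    have z: "(\<Prod>u\<in>S. x - u) = 0" using x assms by (intro prod_zero) auto
    have e: "{..card S} = insert (card S) {..<card S}" by auto
    have "(\<Sum>t\<le>card S. \<gamma> t * x ^ t) = \<gamma> (card S) * x ^ card S + (\<Sum>t<card S. \<gamma> t * x ^ t)"
      unfolding e by (subst sum.insert) auto
    then have "0 = x ^ card S + (\<Sum>t<card S. \<gamma> t * x ^ t)"
      using g z by simp
    then have "x ^ card S = - (\<Sum>t<card S. \<gamma> t * x ^ t)"
      by (simp add: eq_neg_iff_add_eq_0)
    then show ?thesis by (simp add: sum_negf)
  qed
  then show ?thesis by (intro exI[of _ "\<lambda>k. - \<gamma> k"]) blast
qed
definition mon :: "nat \<times> nat \<Rightarrow> 'a \<times> 'a \<Rightarrow> 'a::field" where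
  "mon m p = fst p ^ fst m * snd p ^ snd m"

locale grid =
  fixes S1 S2 :: "'a::field set" and s :: nat
  assumes fin1: "finite S1" and fin2: "finite S2" and c1: "card S1 = s" and c2: "card S2 = s"
begin

lemma finite_Delta: "finite (Delta s)" unfolding Delta_eq by simp

lemma inj_eval:
  assumes "\<forall>p\<in>S1 \<times> S2. (\<Sum>N\<in>Delta s. R N * mon N p) = 0"
  shows "\<forall>N\<in>Delta s. R N = 0"
proof -
  have row: "\<forall>a<s. (\<Sum>b<s. R (a,b) * y ^ b) = 0" if y: "y \<in> S2" for y
  proof -
    have "\<forall>x\<in>S1. (\<Sum>a<s. (\<Sum>b<s. R (a,b) * y ^ b) * x ^ a) = 0"
    proof
      fix x assume x: "x \<in> S1"
      have "(\<Sum>a<s. (\<Sum>b<s. R (a,b) * y ^ b) * x ^ a) = (\<Sum>a<s. \<Sum>b<s. R (a,b) * mon (a,b) (x,y))"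
        by (simp add: sum_distrib_right sum_distrib_left mon_def mult_ac)
      also have "\<dots> = (\<Sum>N\<in>Delta s. R N * mon N (x,y))"
        unfolding Delta_eq sum.cartesian_product by (simp add: case_prod_beta)
      also have "\<dots> = 0" using assms x y by auto
      finally show "(\<Sum>a<s. (\<Sum>b<s. R (a,b) * y ^ b) * x ^ a) = 0" .
    qed
    from uni_zero[OF fin1 c1 this] show ?thesis .
  qed
  show ?thesis
  proof
    fix N assume N: "N \<in> Delta s"
    obtain a b where ab: "N = (a,b)" by (cases N)
    have "a < s" "b < s" using N ab by (auto simp: Delta_def)
    have "\<forall>y\<in>S2. (\<Sum>b<s. R (a,b) * y ^ b) = 0" using row \<open>a < s\<close> by blast
    from uni_zero[OF fin2 c2 this] have "\<forall>b<s. R (a,b) = 0" .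
    then show "R N = 0" using ab \<open>b < s\<close> by simp
  qed
qed

lemma red:
  "\<exists>r. (\<forall>N. r N \<noteq> 0 \<longrightarrow> N \<in> Delta s)
     \<and> (\<forall>p\<in>S1 \<times> S2. (\<Sum>N\<in>Delta s. r N * mon N p) = mon M p)
     \<and> (M \<in> Delta s \<longrightarrow> r = (\<lambda>N. if N = M then 1 else 0))
     \<and> (M \<notin> Delta s \<longrightarrow> (\<forall>N. r N \<noteq> 0 \<longrightarrow> fst N + snd N < fst M + snd M))"
proof (induction "fst M + snd M" arbitrary: M rule: less_induct)
  case less
  define Q where "Q M' r \<longleftrightarrow> (\<forall>N. r N \<noteq> 0 \<longrightarrow> N \<in> Delta s)
     \<and> (\<forall>p\<in>S1 \<times> S2. (\<Sum>N\<in>Delta s. r N * mon N p) = mon M' p)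
     \<and> (M' \<in> Delta s \<longrightarrow> r = (\<lambda>N. if N = M' then 1 else 0))
     \<and> (M' \<notin> Delta s \<longrightarrow> (\<forall>N. r N \<noteq> 0 \<longrightarrow> fst N + snd N < fst M' + snd M'))" for M' r
  have degQ: "Q M' r \<Longrightarrow> r N \<noteq> 0 \<Longrightarrow> fst N + snd N \<le> fst M' + snd M'" for M' r N
    unfolding Q_def by (metis less_or_eq_imp_le)
  show ?case
  proof (cases "M \<in> Delta s")
    case True
    have "(\<Sum>N\<in>Delta s. (if N = M then 1 else 0) * mon N p) = mon M p" for p :: "'a \<times> 'a"
    proof -
      have "(\<Sum>N\<in>Delta s. (if N = M then 1 else 0) * mon N p) = (\<Sum>N\<in>Delta s. if N = M then mon N p else 0)"
        by (rule sum.cong) auto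
      also have "\<dots> = mon M p" using True finite_Delta by (simp add: sum.delta')
      finally show ?thesis .
    qed
    then show ?thesis using True by (intro exI[of _ "\<lambda>N. if N = M then 1 else 0"]) auto
  next
    case False
    obtain c d where M: "M = (c,d)" by (cases M)
    show ?thesis
    proof (cases "s \<le> c")
      case cs: True
      obtain \<alpha> where al: "\<forall>x\<in>S1. x ^ s = (\<Sum>k<s. \<alpha> k * x ^ k)"
        using pow_reduce[OF fin1] c1 by auto
      define Mk where "Mk k = (c - s + k, d)" for k
      have "\<forall>k\<in>{..<s}. \<exists>r. Q (Mk k) r"
      proof
        fix k assume "k \<in> {..<s}"
        then have "fst (Mk k) + snd (Mk k) < fst M + snd M" using cs M by (auto simp: Mk_def)
        then show "\<exists>r. Q (Mk k) r" using less unfolding Q_def by blast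
      qed
      from bchoice[OF this] obtain R where R: "\<forall>k\<in>{..<s}. Q (Mk k) (R k)" by blast
      define r where "r N = (\<Sum>k<s. \<alpha> k * R k N)" for N
      have nz: "r N \<noteq> 0 \<Longrightarrow> \<exists>k<s. R k N \<noteq> 0" for N
        unfolding r_def by (metis (no_types, lifting) lessThan_iff mult_zero_right sum.neutral)
      have "Q M r"
        unfolding Q_def
      proof (intro conjI allI impI ballI)
        fix N assume "r N \<noteq> 0"
        then obtain k where "k < s" "R k N \<noteq> 0" using nz by blast
        then show "N \<in> Delta s" using R unfolding Q_def by (meson lessThan_iff)
      next
        fix N assume "r N \<noteq> 0"
        then obtain k where k: "k < s" "R k N \<noteq> 0" using nz by blast
        then have "fst N + snd N \<le> fst (Mk k) + snd (Mk k)" using R degQ by (meson lessThan_iff)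
        also have "\<dots> < fst M + snd M" using cs M k by (auto simp: Mk_def)
        finally show "fst N + snd N < fst M + snd M" .
      next
        fix p :: "'a \<times> 'a" assume p: "p \<in> S1 \<times> S2"
        obtain x y where xy: "p = (x,y)" by (cases p)
        have "(\<Sum>N\<in>Delta s. r N * mon N p) = (\<Sum>N\<in>Delta s. \<Sum>k<s. \<alpha> k * (R k N * mon N p))"
          unfolding r_def by (simp add: sum_distrib_right mult.assoc)
        also have "\<dots> = (\<Sum>k<s. \<Sum>N\<in>Delta s. \<alpha> k * (R k N * mon N p))"
          by (rule sum.swap)
        also have "\<dots> = (\<Sum>k<s. \<alpha> k * (\<Sum>N\<in>Delta s. R k N * mon N p))"
          by (simp add: sum_distrib_left)
        also have "\<dots> = (\<Sum>k<s. \<alpha> k * mon (Mk k) p)"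
          by (rule sum.cong[OF refl]) (metis R Q_def p)
        also have "\<dots> = (\<Sum>k<s. x ^ (c - s) * (\<alpha> k * x ^ k) * y ^ d)"
          by (rule sum.cong) (simp_all add: xy mon_def Mk_def power_add mult_ac)
        also have "\<dots> = x ^ (c - s) * (\<Sum>k<s. \<alpha> k * x ^ k) * y ^ d"
          by (simp add: sum_distrib_left sum_distrib_right)
        also have "\<dots> = x ^ (c - s) * x ^ s * y ^ d" using al p xy by auto
        also have "\<dots> = mon M p" using cs by (simp add: xy M mon_def flip: power_add)
        finally show "(\<Sum>N\<in>Delta s. r N * mon N p) = mon M p" .
      qed (use False in auto)
      then show ?thesis unfolding Q_def by (rule exI[of _ r])
    next
      case cs: False
      then have ds: "s \<le> d" using False M by (auto simp: Delta_def)
      obtain \<alpha> where al: "\<forall>y\<in>S2. y ^ s = (\<Sum>k<s. \<alpha> k * y ^ k)"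
        using pow_reduce[OF fin2] c2 by auto
      define Mk where "Mk k = (c, d - s + k)" for k
      have "\<forall>k\<in>{..<s}. \<exists>r. Q (Mk k) r"
      proof
        fix k assume "k \<in> {..<s}"
        then have "fst (Mk k) + snd (Mk k) < fst M + snd M" using ds M by (auto simp: Mk_def)
        then show "\<exists>r. Q (Mk k) r" using less unfolding Q_def by blast
      qed
      from bchoice[OF this] obtain R where R: "\<forall>k\<in>{..<s}. Q (Mk k) (R k)" by blast
      define r where "r N = (\<Sum>k<s. \<alpha> k * R k N)" for N
      have nz: "r N \<noteq> 0 \<Longrightarrow> \<exists>k<s. R k N \<noteq> 0" for N
        unfolding r_def by (metis (no_types, lifting) lessThan_iff mult_zero_right sum.neutral)
      have "Q M r"
        unfolding Q_def
      proof (intro conjI allI impI ballI)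
        fix N assume "r N \<noteq> 0"
        then obtain k where "k < s" "R k N \<noteq> 0" using nz by blast
        then show "N \<in> Delta s" using R unfolding Q_def by (meson lessThan_iff)
      next
        fix N assume "r N \<noteq> 0"
        then obtain k where k: "k < s" "R k N \<noteq> 0" using nz by blast
        then have "fst N + snd N \<le> fst (Mk k) + snd (Mk k)" using R degQ by (meson lessThan_iff)
        also have "\<dots> < fst M + snd M" using ds M k by (auto simp: Mk_def)
        finally show "fst N + snd N < fst M + snd M" .
      next
        fix p :: "'a \<times> 'a" assume p: "p \<in> S1 \<times> S2"
        obtain x y where xy: "p = (x,y)" by (cases p)
        have "(\<Sum>N\<in>Delta s. r N * mon N p) = (\<Sum>N\<in>Delta s. \<Sum>k<s. \<alpha> k * (R k N * mon N p))"
          unfolding r_def by (simp add: sum_distrib_right mult.assoc)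
        also have "\<dots> = (\<Sum>k<s. \<Sum>N\<in>Delta s. \<alpha> k * (R k N * mon N p))"
          by (rule sum.swap)
        also have "\<dots> = (\<Sum>k<s. \<alpha> k * (\<Sum>N\<in>Delta s. R k N * mon N p))"
          by (simp add: sum_distrib_left)
        also have "\<dots> = (\<Sum>k<s. \<alpha> k * mon (Mk k) p)"
          by (rule sum.cong[OF refl]) (metis R Q_def p)
        also have "\<dots> = (\<Sum>k<s. x ^ c * (y ^ (d - s) * (\<alpha> k * y ^ k)))"
          by (rule sum.cong) (simp_all add: xy mon_def Mk_def power_add mult_ac)
        also have "\<dots> = x ^ c * (y ^ (d - s) * (\<Sum>k<s. \<alpha> k * y ^ k))"
          by (simp add: sum_distrib_left)
        also have "\<dots> = x ^ c * (y ^ (d - s) * y ^ s)" using al p xy by auto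
        also have "\<dots> = mon M p" using ds by (simp add: xy M mon_def flip: power_add)
        finally show "(\<Sum>N\<in>Delta s. r N * mon N p) = mon M p" .
      qed (use False in auto)
      then show ?thesis unfolding Q_def by (rule exI[of _ r])
    qed
  qed
qed

end

lemma sum_single:
  assumes "finite A" "a \<in> A" "\<forall>x\<in>A. x \<noteq> a \<longrightarrow> f x = 0"
  shows "sum f A = f a"
proof -
  have "sum f A = f a + sum f (A - {a})" using assms by (simp add: sum.remove)
  also have "sum f (A - {a}) = 0" using assms by (intro sum.neutral) auto
  finally show ?thesis by simp
qed

lemma mon_padd: "mon (padd e N) p = mon e p * mon N p"
  by (simp add: mon_def padd_def power_add mult_ac)

lemma exists_max_key:
  assumes "finite A" "A \<noteq> {}"
  shows "\<exists>e0\<in>A. \<forall>e\<in>A. key e \<le> key e0"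
proof -
  have "Max (key ` A) \<in> key ` A" using assms by (intro Max_in) auto
  then obtain e0 where "e0 \<in> A" "key e0 = Max (key ` A)" by auto
  moreover have "\<forall>e\<in>A. key e \<le> Max (key ` A)" using assms by auto
  ultimately show ?thesis by metis
qed

context grid
begin

lemma finite_grid: "finite (S1 \<times> S2)" using fin1 fin2 by simp

lemma key_lemma:
  assumes "finite I" "m \<in> Delta s"
    "\<forall>i\<in>I. \<kappa> i \<noteq> 0 \<longrightarrow> key (\<mu> i) \<le> key m"
    "(\<Sum>i\<in>{i\<in>I. \<mu> i = m}. \<kappa> i) \<noteq> 0"
  shows "\<exists>R. (\<forall>N. R N \<noteq> 0 \<longrightarrow> N \<in> Delta s)
    \<and> (\<forall>p\<in>S1\<times>S2. (\<Sum>N\<in>Delta s. R N * mon N p) = (\<Sum>i\<in>I. \<kappa> i * mon (\<mu> i) p))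
    \<and> R m \<noteq> 0 \<and> (\<forall>N\<in>Delta s. key m < key N \<longrightarrow> R N = 0)"
proof -
  have "\<forall>M. \<exists>r. (\<forall>N. r N \<noteq> 0 \<longrightarrow> N \<in> Delta s)
     \<and> (\<forall>p\<in>S1 \<times> S2. (\<Sum>N\<in>Delta s. r N * mon N p) = mon M p)
     \<and> (M \<in> Delta s \<longrightarrow> r = (\<lambda>N. if N = M then 1 else 0))
     \<and> (M \<notin> Delta s \<longrightarrow> (\<forall>N. r N \<noteq> 0 \<longrightarrow> fst N + snd N < fst M + snd M))"
    using red by blast
  from choice[OF this] obtain rd where rd: "\<forall>M. (\<forall>N. rd M N \<noteq> 0 \<longrightarrow> N \<in> Delta s)
     \<and> (\<forall>p\<in>S1 \<times> S2. (\<Sum>N\<in>Delta s. rd M N * mon N p) = mon M p)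
     \<and> (M \<in> Delta s \<longrightarrow> rd M = (\<lambda>N. if N = M then 1 else 0))
     \<and> (M \<notin> Delta s \<longrightarrow> (\<forall>N. rd M N \<noteq> 0 \<longrightarrow> fst N + snd N < fst M + snd M))" by blast
  define R where "R N = (\<Sum>i\<in>I. \<kappa> i * rd (\<mu> i) N)" for N
  have supp: "\<forall>N. R N \<noteq> 0 \<longrightarrow> N \<in> Delta s"
  proof (intro allI impI)
    fix N assume "R N \<noteq> 0"
    then obtain i where "i \<in> I" "rd (\<mu> i) N \<noteq> 0" unfolding R_def
      by (metis (no_types, lifting) mult_zero_right sum.neutral)
    then show "N \<in> Delta s" using rd by blast
  qed
  have ev: "\<forall>p\<in>S1\<times>S2. (\<Sum>N\<in>Delta s. R N * mon N p) = (\<Sum>i\<in>I. \<kappa> i * mon (\<mu> i) p)"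
  proof
    fix p :: "'a \<times> 'a" assume p: "p \<in> S1 \<times> S2"
    have "(\<Sum>N\<in>Delta s. R N * mon N p) = (\<Sum>N\<in>Delta s. \<Sum>i\<in>I. \<kappa> i * (rd (\<mu> i) N * mon N p))"
      unfolding R_def by (simp add: sum_distrib_right mult.assoc)
    also have "\<dots> = (\<Sum>i\<in>I. \<Sum>N\<in>Delta s. \<kappa> i * (rd (\<mu> i) N * mon N p))"
      by (rule sum.swap)
    also have "\<dots> = (\<Sum>i\<in>I. \<kappa> i * (\<Sum>N\<in>Delta s. rd (\<mu> i) N * mon N p))"
      by (simp add: sum_distrib_left)
    also have "\<dots> = (\<Sum>i\<in>I. \<kappa> i * mon (\<mu> i) p)"
      by (rule sum.cong[OF refl]) (metis rd p)
    finally show "(\<Sum>N\<in>Delta s. R N * mon N p) = (\<Sum>i\<in>I. \<kappa> i * mon (\<mu> i) p)" .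
  qed
  have coef: "R N = (\<Sum>i\<in>{i\<in>I. \<mu> i = N}. \<kappa> i)" if N: "N \<in> Delta s" "key m \<le> key N" for N
  proof -
    have "\<kappa> i * rd (\<mu> i) N = (if \<mu> i = N then \<kappa> i else 0)" if i: "i \<in> I" for i
    proof (cases "\<kappa> i = 0")
      case True then show ?thesis by simp
    next
      case False
      then have k: "key (\<mu> i) \<le> key N" using assms(3) i N by fastforce
      show ?thesis
      proof (cases "\<mu> i \<in> Delta s")
        case True
        then have "rd (\<mu> i) = (\<lambda>N'. if N' = \<mu> i then 1 else 0)" using rd by blast
        then show ?thesis by simp
      next
        case nd: False
        have "rd (\<mu> i) N = 0"
        proof (rule ccontr)
          assume "rd (\<mu> i) N \<noteq> 0"
          then have "fst N + snd N < fst (\<mu> i) + snd (\<mu> i)" using rd nd by blast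
          with key_deg_mono[OF k] show False by simp
        qed
        moreover have "\<mu> i \<noteq> N" using nd N by auto
        ultimately show ?thesis by simp
      qed
    qed
    then have "R N = (\<Sum>i\<in>I. if \<mu> i = N then \<kappa> i else 0)"
      unfolding R_def by (intro sum.cong) auto
    also have "\<dots> = (\<Sum>i\<in>{i\<in>I. \<mu> i = N}. \<kappa> i)"
      using assms(1) by (simp add: sum.inter_filter)
    finally show ?thesis .
  qed
  have "R m \<noteq> 0" using coef[OF assms(2)] assms(4) by simp
  moreover have "\<forall>N\<in>Delta s. key m < key N \<longrightarrow> R N = 0"
  proof (intro ballI impI)
    fix N assume N: "N \<in> Delta s" "key m < key N"
    have "R N = (\<Sum>i\<in>{i\<in>I. \<mu> i = N}. \<kappa> i)" using coef N by simp
    also have "\<dots> = 0"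
    proof (rule sum.neutral, rule ballI)
      fix i assume "i \<in> {i\<in>I. \<mu> i = N}"
      then show "\<kappa> i = 0" using assms(3) N by fastforce
    qed
    finally show "R N = 0" .
  qed
  ultimately show ?thesis using supp ev by blast
qed

lemma plb:
  assumes P: "\<forall>N. P N \<noteq> 0 \<longrightarrow> N \<in> Delta s" and Pm: "P m \<noteq> 0"
    and top: "\<forall>N. P N \<noteq> 0 \<longrightarrow> key N \<le> key m"
  shows "(s - fst m) * (s - snd m) \<le> card {p\<in>S1\<times>S2. (\<Sum>N\<in>Delta s. P N * mon N p) \<noteq> 0}"
proof (rule ccontr)
  define c where "c p = (\<Sum>N\<in>Delta s. P N * mon N p)" for p
  define X where "X = {p\<in>S1\<times>S2. c p \<noteq> 0}"
  define E where "E = {..<s - fst m} \<times> {..<s - snd m}"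
  assume "\<not> ?thesis"
  then have cX: "card X < card E" unfolding X_def E_def c_def by (simp add: card_cartesian_product)
  have fX: "finite X" unfolding X_def using finite_grid by simp
  have fE: "finite E" unfolding E_def by simp
  have mD: "m \<in> Delta s" using P Pm by blast
  obtain w where w: "\<exists>e\<in>E. w e \<noteq> 0" "\<forall>p\<in>X. (\<Sum>e\<in>E. w e * mon e p) = 0"
    using dep[OF fX fE cX, of mon] by blast
  obtain e0 where e0: "e0 \<in> {e\<in>E. w e \<noteq> 0}" "\<forall>e\<in>{e\<in>E. w e \<noteq> 0}. key e \<le> key e0"
    using exists_max_key[of "{e\<in>E. w e \<noteq> 0}"] fE w(1) by auto
  define I where "I = E \<times> Delta s"
  define \<kappa> where "\<kappa> i = w (fst i) * P (snd i)" for i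
  define \<mu> where "\<mu> i = padd (fst i) (snd i)" for i
  define m' where "m' = padd e0 m"
  have fI: "finite I" unfolding I_def using fE finite_Delta by simp
  have m'D: "m' \<in> Delta s" using e0 mD unfolding m'_def padd_def E_def Delta_def by auto
  have c1: "\<forall>i\<in>I. \<kappa> i \<noteq> 0 \<longrightarrow> key (\<mu> i) \<le> key m'"
    unfolding \<kappa>_def \<mu>_def m'_def I_def using e0 top by (auto intro!: key_padd_le)
  have single: "\<forall>i\<in>{i\<in>I. \<mu> i = m'}. i \<noteq> (e0, m) \<longrightarrow> \<kappa> i = 0"
  proof (intro ballI impI)
    fix i assume i: "i \<in> {i\<in>I. \<mu> i = m'}" "i \<noteq> (e0, m)"
    show "\<kappa> i = 0"
    proof (rule ccontr)
      assume k: "\<kappa> i \<noteq> 0"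
      then have we: "w (fst i) \<noteq> 0" "P (snd i) \<noteq> 0" unfolding \<kappa>_def by auto
      have "fst i \<in> E" using i unfolding I_def by auto
      then have k1: "key (fst i) \<le> key e0" using e0 we by blast
      have k2: "key (snd i) \<le> key m" using top we by blast
      have eq: "padd (fst i) (snd i) = padd e0 m" using i unfolding \<mu>_def m'_def by auto
      have "key (fst i) = key e0"
      proof (rule ccontr)
        assume "key (fst i) \<noteq> key e0"
        then have "key (fst i) < key e0" using k1 by simp
        from key_padd_less2[OF k2 this] have "key (padd (snd i) (fst i)) < key (padd m e0)" .
        moreover have "padd (snd i) (fst i) = padd m e0" using eq unfolding padd_def by auto
        ultimately show False by simp
      qed
      then have "fst i = e0" by (rule key_inj)
      moreover then have "snd i = m" using eq unfolding padd_def by (auto simp: prod_eq_iff)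
      ultimately show False using i(2) by (auto simp: prod_eq_iff)
    qed
  qed
  have inI: "(e0, m) \<in> {i\<in>I. \<mu> i = m'}" using e0 mD unfolding I_def \<mu>_def m'_def by auto
  have c2: "(\<Sum>i\<in>{i\<in>I. \<mu> i = m'}. \<kappa> i) \<noteq> 0"
    using sum_single[OF _ inI single] fI e0 Pm by (simp add: \<kappa>_def)
  obtain R where R: "\<forall>N. R N \<noteq> 0 \<longrightarrow> N \<in> Delta s"
    "\<forall>p\<in>S1\<times>S2. (\<Sum>N\<in>Delta s. R N * mon N p) = (\<Sum>i\<in>I. \<kappa> i * mon (\<mu> i) p)"
    "R m' \<noteq> 0"
    using key_lemma[OF fI m'D c1 c2] by blast
  have "\<forall>p\<in>S1\<times>S2. (\<Sum>N\<in>Delta s. R N * mon N p) = 0"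
  proof
    fix p assume p: "p \<in> S1 \<times> S2"
    have "(\<Sum>i\<in>I. \<kappa> i * mon (\<mu> i) p) = (\<Sum>e\<in>E. \<Sum>N\<in>Delta s. (w e * mon e p) * (P N * mon N p))"
      unfolding I_def sum.cartesian_product \<kappa>_def \<mu>_def
      by (rule sum.cong) (auto simp: mon_padd mult_ac)
    also have "\<dots> = (\<Sum>e\<in>E. w e * mon e p) * c p"
      unfolding c_def by (simp add: sum_product)
    also have "\<dots> = 0"
    proof (cases "c p = 0")
      case False
      then have "p \<in> X" unfolding X_def using p by auto
      then show ?thesis using w by simp
    qed simp
    moreover have "(\<Sum>N\<in>Delta s. R N * mon N p) = (\<Sum>i\<in>I. \<kappa> i * mon (\<mu> i) p)" using R(2) p by blast
    ultimately show "(\<Sum>N\<in>Delta s. R N * mon N p) = 0" by simp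
  qed
  then have "\<forall>N\<in>Delta s. R N = 0" by (rule inj_eval)
  then show False using R m'D by blast
qed

lemma dl:
  assumes mD: "m \<in> Delta s"
    and low: "\<forall>N\<in>Delta s. key N < key m \<longrightarrow> (\<Sum>p\<in>S1\<times>S2. v p * mon N p) = 0"
    and vm: "(\<Sum>p\<in>S1\<times>S2. v p * mon m p) \<noteq> 0"
  shows "(fst m + 1) * (snd m + 1) \<le> card {p\<in>S1\<times>S2. v p \<noteq> 0}"
proof (rule ccontr)
  define T where "T = {p\<in>S1\<times>S2. v p \<noteq> 0}"
  define E where "E = {..fst m} \<times> {..snd m}"
  assume "\<not> ?thesis"
  then have cT: "card T < card E" unfolding T_def E_def by (simp add: card_cartesian_product)
  have fT: "finite T" unfolding T_def using finite_grid by simp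
  have fE: "finite E" unfolding E_def by simp
  obtain w where w: "\<exists>e\<in>E. w e \<noteq> 0" "\<forall>p\<in>T. (\<Sum>e\<in>E. w e * mon e p) = 0"
    using dep[OF fT fE cT, of mon] by blast
  obtain e0 where e0: "e0 \<in> {e\<in>E. w e \<noteq> 0}" "\<forall>e\<in>{e\<in>E. w e \<noteq> 0}. key e \<le> key e0"
    using exists_max_key[of "{e\<in>E. w e \<noteq> 0}"] fE w(1) by auto
  define d where "d = (fst m - fst e0, snd m - snd e0)"
  have e0d: "padd e0 d = m" using e0 unfolding d_def padd_def E_def by (auto simp: prod_eq_iff)
  define \<mu> where "\<mu> e = padd e d" for e
  have c1: "\<forall>e\<in>E. w e \<noteq> 0 \<longrightarrow> key (\<mu> e) \<le> key m"
  proof (intro ballI impI)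
    fix e assume "e \<in> E" "w e \<noteq> 0"
    then have "key e \<le> key e0" using e0 by blast
    from key_padd_le[OF this order.refl[of "key d"]] show "key (\<mu> e) \<le> key m"
      unfolding \<mu>_def e0d .
  qed
  have single: "\<forall>e\<in>{e\<in>E. \<mu> e = m}. e \<noteq> e0 \<longrightarrow> w e = 0"
    using e0d unfolding \<mu>_def padd_def by (auto simp: prod_eq_iff)
  have inE: "e0 \<in> {e\<in>E. \<mu> e = m}" using e0 e0d unfolding \<mu>_def by auto
  have c2: "(\<Sum>e\<in>{e\<in>E. \<mu> e = m}. w e) \<noteq> 0"
    using sum_single[OF _ inE single] fE e0 by simp
  obtain R where R: "\<forall>N. R N \<noteq> 0 \<longrightarrow> N \<in> Delta s"
    "\<forall>p\<in>S1\<times>S2. (\<Sum>N\<in>Delta s. R N * mon N p) = (\<Sum>e\<in>E. w e * mon (\<mu> e) p)"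
    "R m \<noteq> 0" "\<forall>N\<in>Delta s. key m < key N \<longrightarrow> R N = 0"
    using key_lemma[OF fE mD c1 c2] by blast
  have A: "(\<Sum>p\<in>S1\<times>S2. v p * (\<Sum>N\<in>Delta s. R N * mon N p)) = 0"
  proof (rule sum.neutral, rule ballI)
    fix p assume p: "p \<in> S1 \<times> S2"
    have "(\<Sum>N\<in>Delta s. R N * mon N p) = (\<Sum>e\<in>E. w e * mon (\<mu> e) p)" using R(2) p by blast
    also have "\<dots> = mon d p * (\<Sum>e\<in>E. w e * mon e p)"
      unfolding \<mu>_def by (simp add: mon_padd sum_distrib_left mult_ac)
    finally have eq: "(\<Sum>N\<in>Delta s. R N * mon N p) = mon d p * (\<Sum>e\<in>E. w e * mon e p)" .
    show "v p * (\<Sum>N\<in>Delta s. R N * mon N p) = 0"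
    proof (cases "v p = 0")
      case False
      then have "p \<in> T" unfolding T_def using p by auto
      then show ?thesis using w(2) eq by simp
    qed simp
  qed
  have "(\<Sum>p\<in>S1\<times>S2. v p * (\<Sum>N\<in>Delta s. R N * mon N p))
      = (\<Sum>N\<in>Delta s. R N * (\<Sum>p\<in>S1\<times>S2. v p * mon N p))"
    by (simp add: sum_distrib_left sum_distrib_right mult_ac sum.swap[of _ "S1 \<times> S2" "Delta s"])
  also have "\<dots> = (\<Sum>N\<in>Delta s. if N = m then R m * (\<Sum>p\<in>S1\<times>S2. v p * mon m p) else 0)"
  proof (rule sum.cong[OF refl])
    fix N assume N: "N \<in> Delta s"
    show "R N * (\<Sum>p\<in>S1\<times>S2. v p * mon N p) = (if N = m then R m * (\<Sum>p\<in>S1\<times>S2. v p * mon m p) else 0)"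
    proof (cases "N = m")
      case False
      then have "key N < key m \<or> key m < key N" using key_inj by (metis linorder_neqE_nat)
      then show ?thesis using False low R(4) N by auto
    qed simp
  qed
  also have "\<dots> = R m * (\<Sum>p\<in>S1\<times>S2. v p * mon m p)" using mD finite_Delta by simp
  finally show False using A R(3) vm by simp
qed

end

declare split_paired_All[simp del] split_paired_Ex[simp del]

lemma exists_min_key:
  assumes "finite A" "A \<noteq> {}"
  shows "\<exists>e0\<in>A. \<forall>e\<in>A. key e0 \<le> key e"
proof -
  have "Min (key ` A) \<in> key ` A" using assms by (intro Min_in) auto
  then obtain e0 where "e0 \<in> A" "key e0 = Min (key ` A)" by auto
  moreover have "\<forall>e\<in>A. Min (key ` A) \<le> key e" using assms by auto
  ultimately show ?thesis by metis
qed

lemma alpha_exists: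
  fixes S :: "'a::field set"
  assumes "finite S" "k < card S"
  shows "\<exists>\<alpha>. (\<forall>a<k. (\<Sum>x\<in>S. \<alpha> x * x ^ a) = 0) \<and> (\<Sum>x\<in>S. \<alpha> x * x ^ k) \<noteq> 0"
proof -
  obtain U where U: "U \<subseteq> S" "card U = k + 1" "finite U"
    using obtain_subset_with_card_n[of "k+1" S] assms by auto
  have cX: "card {..<k} < card U" using U by simp
  obtain w where w: "\<exists>u\<in>U. w u \<noteq> 0" "\<forall>a\<in>{..<k}. (\<Sum>x\<in>U. w x * x ^ a) = 0"
    using dep[OF finite_lessThan U(3) cX, of "\<lambda>x a. x ^ a"] by blast
  define \<alpha> where "\<alpha> x = (if x \<in> U then w x else 0)" for x
  have sU: "(\<Sum>x\<in>S. \<alpha> x * x ^ a) = (\<Sum>x\<in>U. w x * x ^ a)" for a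
  proof -
    have "(\<Sum>x\<in>S. \<alpha> x * x ^ a) = (\<Sum>x\<in>U. \<alpha> x * x ^ a)"
      using U assms(1) by (intro sum.mono_neutral_right) (auto simp: \<alpha>_def)
    also have "\<dots> = (\<Sum>x\<in>U. w x * x ^ a)" by (intro sum.cong) (auto simp: \<alpha>_def)
    finally show ?thesis .
  qed
  have "(\<Sum>x\<in>U. w x * x ^ k) \<noteq> 0"
  proof
    assume z: "(\<Sum>x\<in>U. w x * x ^ k) = 0"
    then have all: "\<forall>a\<le>k. (\<Sum>x\<in>U. w x * x ^ a) = 0" using w(2)
      by (metis le_neq_implies_less lessThan_iff)
    obtain u where u: "u \<in> U" "w u \<noteq> 0" using w(1) by blast
    have fU': "finite (U - {u})" using U by simp
    have cU': "card (U - {u}) = k" using U u by simp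
    obtain \<gamma> where g: "\<forall>x. (\<Prod>t\<in>U - {u}. x - t) = (\<Sum>t\<le>k. \<gamma> t * x ^ t)"
      using prod_lin_expand[OF fU'] cU' by auto
    have "(\<Sum>x\<in>U. w x * (\<Prod>t\<in>U - {u}. x - t)) = (\<Sum>x\<in>U. \<Sum>t\<le>k. \<gamma> t * (w x * x ^ t))"
      using g by (simp add: sum_distrib_left mult_ac)
    also have "\<dots> = (\<Sum>t\<le>k. \<Sum>x\<in>U. \<gamma> t * (w x * x ^ t))" by (rule sum.swap)
    also have "\<dots> = (\<Sum>t\<le>k. \<gamma> t * (\<Sum>x\<in>U. w x * x ^ t))" by (simp add: sum_distrib_left)
    also have "\<dots> = 0" using all by simp
    finally have z2: "(\<Sum>x\<in>U. w x * (\<Prod>t\<in>U - {u}. x - t)) = 0" .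
    have "(\<Sum>x\<in>U. w x * (\<Prod>t\<in>U - {u}. x - t)) = w u * (\<Prod>t\<in>U - {u}. u - t)"
    proof (rule sum_single[OF U(3) u(1)], intro ballI impI)
      fix x assume "x \<in> U" "x \<noteq> u"
      then have "(\<Prod>t\<in>U - {u}. x - t) = 0" using fU' by (intro prod_zero) auto
      then show "w x * (\<Prod>t\<in>U - {u}. x - t) = 0" by simp
    qed
    moreover have "(\<Prod>t\<in>U - {u}. u - t) \<noteq> 0" using fU' by (subst prod_zero_iff) auto
    ultimately show False using z2 u by simp
  qed
  then show ?thesis using w(2) sU by (intro exI[of _ \<alpha>]) auto
qed

context grid
begin

definition rep :: "(nat \<times> nat \<Rightarrow> 'a) \<Rightarrow> 'a \<times> 'a \<Rightarrow> 'a" where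
  "rep P = (\<lambda>p. if p \<in> S1 \<times> S2 then (\<Sum>N\<in>Delta s. P N * mon N p) else 0)"

definition ip :: "('a \<times> 'a \<Rightarrow> 'a) \<Rightarrow> ('a \<times> 'a \<Rightarrow> 'a) \<Rightarrow> 'a" where
  "ip v c = (\<Sum>p\<in>S1\<times>S2. v p * c p)"

lemma code_rep:
  assumes "L \<subseteq> Delta s"
  shows "c \<in> evcode S1 S2 L \<longleftrightarrow> (\<exists>P. (\<forall>N. P N \<noteq> 0 \<longrightarrow> N \<in> L) \<and> c = rep P)"
proof
  assume "c \<in> evcode S1 S2 L"
  then obtain f where f: "c = (\<lambda>p. if p \<in> S1 \<times> S2
               then (\<Sum>m\<in>L. f m * fst p ^ fst m * snd p ^ snd m) else 0)"
    unfolding evcode_def by blast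
  define P where "P N = (if N \<in> L then f N else 0)" for N
  have "(\<Sum>m\<in>L. f m * fst p ^ fst m * snd p ^ snd m) = (\<Sum>N\<in>Delta s. P N * mon N p)" for p
  proof -
    have "(\<Sum>N\<in>Delta s. P N * mon N p) = (\<Sum>N\<in>L. P N * mon N p)"
      using assms finite_Delta by (intro sum.mono_neutral_right) (auto simp: P_def)
    also have "\<dots> = (\<Sum>m\<in>L. f m * fst p ^ fst m * snd p ^ snd m)"
      by (intro sum.cong) (auto simp: P_def mon_def mult_ac)
    finally show ?thesis by simp
  qed
  then have "c = rep P" unfolding f rep_def by auto
  moreover have "\<forall>N. P N \<noteq> 0 \<longrightarrow> N \<in> L" unfolding P_def by auto
  ultimately show "\<exists>P. (\<forall>N. P N \<noteq> 0 \<longrightarrow> N \<in> L) \<and> c = rep P" by blast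
next
  assume "\<exists>P. (\<forall>N. P N \<noteq> 0 \<longrightarrow> N \<in> L) \<and> c = rep P"
  then obtain P where P: "\<forall>N. P N \<noteq> 0 \<longrightarrow> N \<in> L" "c = rep P" by blast
  have "(\<Sum>N\<in>Delta s. P N * mon N p) = (\<Sum>m\<in>L. P m * fst p ^ fst m * snd p ^ snd m)" for p
  proof -
    have "(\<Sum>N\<in>Delta s. P N * mon N p) = (\<Sum>N\<in>L. P N * mon N p)"
      using assms finite_Delta P(1) by (intro sum.mono_neutral_right) auto
    also have "\<dots> = (\<Sum>m\<in>L. P m * fst p ^ fst m * snd p ^ snd m)"
      by (intro sum.cong) (auto simp: mon_def mult_ac)
    finally show ?thesis by simp
  qed
  then show "c \<in> evcode S1 S2 L" unfolding evcode_def P(2) rep_def by (intro CollectI exI[of _ P]) auto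
qed

lemma ip_rep: "ip v (rep P) = (\<Sum>N\<in>Delta s. P N * ip v (rep (\<lambda>M. if M = N then 1 else 0)))"
proof -
  have r1: "rep (\<lambda>M. if M = N then 1 else 0) p = (if p \<in> S1 \<times> S2 then (if N \<in> Delta s then mon N p else 0) else 0)" for N p
  proof -
    have "(\<Sum>M\<in>Delta s. (if M = N then 1 else 0) * mon M p) = (\<Sum>M\<in>Delta s. if M = N then mon M p else 0)"
      by (rule sum.cong) auto
    then show ?thesis unfolding rep_def using finite_Delta by (simp add: sum.delta')
  qed
  have "ip v (rep P) = (\<Sum>p\<in>S1\<times>S2. \<Sum>N\<in>Delta s. P N * (v p * mon N p))"
    unfolding ip_def rep_def by (intro sum.cong) (auto simp: sum_distrib_left mult_ac)
  also have "\<dots> = (\<Sum>N\<in>Delta s. \<Sum>p\<in>S1\<times>S2. P N * (v p * mon N p))" by (rule sum.swap)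
  also have "\<dots> = (\<Sum>N\<in>Delta s. P N * ip v (rep (\<lambda>M. if M = N then 1 else 0)))"
    unfolding ip_def r1 by (intro sum.cong) (auto simp: sum_distrib_left)
  finally show ?thesis .
qed

lemma ip_mono: "N \<in> Delta s \<Longrightarrow> ip v (rep (\<lambda>M. if M = N then 1 else 0)) = (\<Sum>p\<in>S1\<times>S2. v p * mon N p)"
proof -
  assume N: "N \<in> Delta s"
  have "(\<Sum>M\<in>Delta s. (if M = N then 1 else 0) * mon M p) = mon N p" for p
  proof -
    have "(\<Sum>M\<in>Delta s. (if M = N then 1 else 0) * mon M p) = (\<Sum>M\<in>Delta s. if M = N then mon M p else 0)"
      by (rule sum.cong) auto
    then show ?thesis using N finite_Delta by (simp add: sum.delta')
  qed
  then show ?thesis unfolding ip_def rep_def by (intro sum.cong) auto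
qed

lemma mono_in_code: "N \<in> L \<Longrightarrow> L \<subseteq> Delta s \<Longrightarrow> rep (\<lambda>M. if M = N then 1 else 0) \<in> evcode S1 S2 L"
proof -
  assume N: "N \<in> L" and L: "L \<subseteq> Delta s"
  have "\<forall>M. (if M = N then 1 else 0) \<noteq> (0::'a) \<longrightarrow> M \<in> L" using N by simp
  then show ?thesis by (subst code_rep[OF L]) (rule exI[of _ "\<lambda>M. if M = N then 1 else 0"], simp)
qed

lemma hweight_rep: "hweight S1 S2 (rep P) = card {p\<in>S1\<times>S2. (\<Sum>N\<in>Delta s. P N * mon N p) \<noteq> 0}"
  unfolding hweight_def rep_def by (rule arg_cong[where f = card]) auto

end

declare split_paired_All[simp del] split_paired_Ex[simp del]

context grid
begin

lemma hweight_le: "hweight S1 S2 c \<le> card (S1 \<times> S2)"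
  unfolding hweight_def using finite_grid by (intro card_mono) auto

lemma M1_eq:
  assumes "c \<in> C1 - C2" "hweight S1 S2 c = x" "\<forall>c\<in>C1 - C2. x \<le> hweight S1 S2 c"
  shows "M1 S1 S2 C1 C2 = x"
proof -
  have "finite (hweight S1 S2 ` (C1 - C2))"
    by (rule finite_subset[of _ "{..card (S1 \<times> S2)}"]) (use hweight_le in auto)
  then show ?thesis unfolding M1_def using assms by (intro Min_eqI) auto
qed

lemma M1_ge:
  assumes "C1 - C2 \<noteq> {}" "\<forall>c\<in>C1 - C2. x \<le> hweight S1 S2 c"
  shows "x \<le> M1 S1 S2 C1 C2"
proof -
  have "finite (hweight S1 S2 ` (C1 - C2))"
    by (rule finite_subset[of _ "{..card (S1 \<times> S2)}"]) (use hweight_le in auto)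
  then show ?thesis unfolding M1_def using assms by (subst Min_ge_iff) auto
qed

lemma min_dist_eq:
  assumes "c \<in> C - {\<lambda>_. 0}" "hweight S1 S2 c = x" "\<forall>c\<in>C - {\<lambda>_. 0}. x \<le> hweight S1 S2 c"
  shows "min_dist S1 S2 C = x"
proof -
  have "finite (hweight S1 S2 ` (C - {\<lambda>_. 0}))"
    by (rule finite_subset[of _ "{..card (S1 \<times> S2)}"]) (use hweight_le in auto)
  then show ?thesis unfolding min_dist_def using assms by (intro Min_eqI) auto
qed

lemma rep_zero: "(\<forall>N. P N = 0) \<Longrightarrow> rep P = (\<lambda>_. 0)"
  unfolding rep_def by auto


end

locale seg = grid +
  fixes T1 T2 :: "nat \<times> nat" and L1 L2 :: "(nat \<times> nat) set"
  assumes T1: "T1 \<in> Delta s" and T2: "T2 \<in> Delta s" and T21: "key T2 \<le> key T1"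
    and L1: "L1 = {N \<in> Delta s. key N \<le> key T1}"
    and L2: "L2 = {N \<in> Delta s. key N < key T2}"
begin

lemma L1D: "L1 \<subseteq> Delta s" using L1 by auto
lemma L2D: "L2 \<subseteq> Delta s" using L2 by auto
lemma L21: "L2 \<subseteq> L1" using L1 L2 T21 by auto
lemma T2in: "T2 \<in> L1 - L2" using L1 L2 T2 T21 by auto

lemma seg_primal:
  assumes c: "c \<in> evcode S1 S2 L1 - evcode S1 S2 L2"
  shows "\<exists>m\<in>L1 - L2. (s - fst m) * (s - snd m) \<le> hweight S1 S2 c"
proof -
  obtain P where P: "\<forall>N. P N \<noteq> 0 \<longrightarrow> N \<in> L1" "c = rep P"
    using c code_rep[OF L1D] by blast
  have "\<exists>N. P N \<noteq> 0 \<and> N \<notin> L2"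
  proof (rule ccontr)
    assume "\<not> ?thesis"
    then have "\<forall>N. P N \<noteq> 0 \<longrightarrow> N \<in> L2" by blast
    then have "c \<in> evcode S1 S2 L2" using code_rep[OF L2D] P(2) by blast
    with c show False by blast
  qed
  then obtain N0 where N0: "P N0 \<noteq> 0" "N0 \<notin> L2" by blast
  define Sup where "Sup = {N \<in> Delta s. P N \<noteq> 0}"
  have fS: "finite Sup" unfolding Sup_def using finite_Delta by simp
  have N0S: "N0 \<in> Sup" using N0 P L1D unfolding Sup_def by blast
  obtain m where m: "m \<in> Sup" "\<forall>e\<in>Sup. key e \<le> key m"
    using exists_max_key[OF fS] N0S by blast
  have mL1: "m \<in> L1" using m P unfolding Sup_def by blast
  have "\<not> key N0 < key T2" using N0 N0S L2 unfolding Sup_def by blast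
  moreover have "key N0 \<le> key m" using m N0S by blast
  ultimately have "m \<notin> L2" using L2 by auto
  moreover have "(s - fst m) * (s - snd m) \<le> hweight S1 S2 c"
    unfolding P(2) hweight_rep
  proof (rule plb)
    show "\<forall>N. P N \<noteq> 0 \<longrightarrow> N \<in> Delta s" using P L1D by blast
    show "P m \<noteq> 0" using m unfolding Sup_def by blast
    show "\<forall>N. P N \<noteq> 0 \<longrightarrow> key N \<le> key m" using m P L1D unfolding Sup_def by blast
  qed
  ultimately show ?thesis using mL1 by blast
qed

lemma seg_min:
  assumes c: "c \<in> evcode S1 S2 L1" "c \<noteq> (\<lambda>_. 0)"
  shows "\<exists>m\<in>L1. (s - fst m) * (s - snd m) \<le> hweight S1 S2 c"
proof -
  obtain P where P: "\<forall>N. P N \<noteq> 0 \<longrightarrow> N \<in> L1" "c = rep P"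
    using c code_rep[OF L1D] by blast
  have "\<exists>N. P N \<noteq> 0" using rep_zero P c by blast
  then obtain N0 where N0: "P N0 \<noteq> 0" by blast
  define Sup where "Sup = {N \<in> Delta s. P N \<noteq> 0}"
  have fS: "finite Sup" unfolding Sup_def using finite_Delta by simp
  have N0S: "N0 \<in> Sup" using N0 P L1D unfolding Sup_def by blast
  obtain m where m: "m \<in> Sup" "\<forall>e\<in>Sup. key e \<le> key m"
    using exists_max_key[OF fS] N0S by blast
  have mL1: "m \<in> L1" using m P unfolding Sup_def by blast
  moreover have "(s - fst m) * (s - snd m) \<le> hweight S1 S2 c"
    unfolding P(2) hweight_rep
  proof (rule plb)
    show "\<forall>N. P N \<noteq> 0 \<longrightarrow> N \<in> Delta s" using P L1D by blast
    show "P m \<noteq> 0" using m unfolding Sup_def by blast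
    show "\<forall>N. P N \<noteq> 0 \<longrightarrow> key N \<le> key m" using m P L1D unfolding Sup_def by blast
  qed
  ultimately show ?thesis by blast
qed

lemma dual_ip: "v \<in> dual S1 S2 C \<longleftrightarrow> v \<in> ambient S1 S2 \<and> (\<forall>c\<in>C. ip v c = 0)"
  unfolding dual_def ip_def by auto

lemma seg_dual:
  assumes v: "v \<in> dual S1 S2 (evcode S1 S2 L2) - dual S1 S2 (evcode S1 S2 L1)"
  shows "\<exists>m\<in>L1 - L2. (fst m + 1) * (snd m + 1) \<le> hweight S1 S2 v"
proof -
  define mv where "mv N = (\<Sum>p\<in>S1\<times>S2. v p * mon N p)" for N
  have vL2: "v \<in> dual S1 S2 (evcode S1 S2 L2)" using v by blast
  have z2: "\<forall>N\<in>L2. mv N = 0"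
  proof
    fix N assume N: "N \<in> L2"
    have "rep (\<lambda>M. if M = N then 1 else 0) \<in> evcode S1 S2 L2" using mono_in_code[OF N L2D] .
    moreover have "\<forall>c\<in>evcode S1 S2 L2. ip v c = 0" using vL2 unfolding dual_ip by blast
    ultimately have "ip v (rep (\<lambda>M. if M = N then 1 else 0)) = 0" by blast
    moreover have "N \<in> Delta s" using N L2D by blast
    ultimately show "mv N = 0" using ip_mono[of N v] unfolding mv_def by simp
  qed
  have amb: "v \<in> ambient S1 S2" using vL2 unfolding dual_ip by blast
  have "v \<notin> dual S1 S2 (evcode S1 S2 L1)" using v by blast
  then have "\<not> (\<forall>c\<in>evcode S1 S2 L1. ip v c = 0)" using amb unfolding dual_ip by blast
  then obtain c where c: "c \<in> evcode S1 S2 L1" "ip v c \<noteq> 0" by blast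
  obtain P where P: "\<forall>N. P N \<noteq> 0 \<longrightarrow> N \<in> L1" "c = rep P"
    using c code_rep[OF L1D] by blast
  have "\<exists>N\<in>Delta s. P N \<noteq> 0 \<and> mv N \<noteq> 0"
  proof (rule ccontr)
    assume neg: "\<not> ?thesis"
    have "\<forall>N\<in>Delta s. P N * ip v (rep (\<lambda>M. if M = N then 1 else 0)) = 0"
    proof
      fix N assume N: "N \<in> Delta s"
      show "P N * ip v (rep (\<lambda>M. if M = N then 1 else 0)) = 0"
      proof -
        have "P N = 0 \<or> mv N = 0" using neg N by blast
        then show ?thesis using ip_mono[OF N, of v] unfolding mv_def by (metis mult_zero_left mult_zero_right)
      qed
    qed
    then have "ip v (rep P) = 0" by (subst ip_rep) (rule sum.neutral)
    then have "ip v c = 0" using P(2) by simp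
    with c show False by simp
  qed
  then obtain N0 where N0': "P N0 \<noteq> 0" "mv N0 \<noteq> 0" by blast
  have N0: "N0 \<in> L1" "mv N0 \<noteq> 0" using P(1) N0' by blast+
  define B where "B = {N \<in> L1. mv N \<noteq> 0}"
  have "B \<subseteq> Delta s" using L1D unfolding B_def by blast
  then have fB: "finite B" using finite_Delta finite_subset by blast
  have "B \<noteq> {}" using N0 unfolding B_def by blast
  then obtain m where m: "m \<in> B" "\<forall>e\<in>B. key m \<le> key e"
    using exists_min_key[OF fB] by blast
  have mL: "m \<in> L1 - L2" using m z2 unfolding B_def by blast
  have "(fst m + 1) * (snd m + 1) \<le> card {p\<in>S1\<times>S2. v p \<noteq> 0}"
  proof (rule dl)
    show "m \<in> Delta s" using mL L1D by blast
    show "\<forall>N\<in>Delta s. key N < key m \<longrightarrow> (\<Sum>p\<in>S1\<times>S2. v p * mon N p) = 0"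
    proof (intro ballI impI)
      fix N assume N: "N \<in> Delta s" "key N < key m"
      have "key m \<le> key T1" using mL L1 by auto
      then have "N \<in> L1" using N L1 by auto
      show "(\<Sum>p\<in>S1\<times>S2. v p * mon N p) = 0"
      proof (rule ccontr)
        assume "(\<Sum>p\<in>S1\<times>S2. v p * mon N p) \<noteq> 0"
        then have "N \<in> B" using \<open>N \<in> L1\<close> unfolding B_def mv_def by blast
        then have "key m \<le> key N" using m(2) by blast
        then show False using N(2) by simp
      qed
    qed
    show "(\<Sum>p\<in>S1\<times>S2. v p * mon m p) \<noteq> 0" using m unfolding B_def mv_def by blast
  qed
  then show ?thesis using mL unfolding hweight_def by blast
qed


end

declare split_paired_All[simp del] split_paired_Ex[simp del]

context seg
begin

lemma seg_dual_ne: "dual S1 S2 (evcode S1 S2 L2) - dual S1 S2 (evcode S1 S2 L1) \<noteq> {}"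
proof -
  obtain k1 k2 where Tk: "T2 = (k1,k2)" by (cases T2)
  have k: "k1 < s" "k2 < s" using T2 Tk by (auto simp: Delta_def)
  obtain \<alpha>1 where a1: "\<forall>a<k1. (\<Sum>x\<in>S1. \<alpha>1 x * x ^ a) = 0" "(\<Sum>x\<in>S1. \<alpha>1 x * x ^ k1) \<noteq> 0"
    using alpha_exists[OF fin1, of k1] c1 k by auto
  obtain \<alpha>2 where a2: "\<forall>a<k2. (\<Sum>x\<in>S2. \<alpha>2 x * x ^ a) = 0" "(\<Sum>x\<in>S2. \<alpha>2 x * x ^ k2) \<noteq> 0"
    using alpha_exists[OF fin2, of k2] c2 k by auto
  define v where "v p = (if p \<in> S1 \<times> S2 then \<alpha>1 (fst p) * \<alpha>2 (snd p) else 0)" for p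
  have mv: "(\<Sum>p\<in>S1\<times>S2. v p * mon N p) = (\<Sum>x\<in>S1. \<alpha>1 x * x ^ fst N) * (\<Sum>y\<in>S2. \<alpha>2 y * y ^ snd N)" for N
  proof -
    have "(\<Sum>p\<in>S1\<times>S2. v p * mon N p) = (\<Sum>x\<in>S1. \<Sum>y\<in>S2. (\<alpha>1 x * x ^ fst N) * (\<alpha>2 y * y ^ snd N))"
      unfolding sum.cartesian_product by (rule sum.cong) (auto simp: v_def mon_def mult_ac split: prod.splits)
    then show ?thesis by (simp add: sum_product)
  qed
  have mv0: "(\<Sum>p\<in>S1\<times>S2. v p * mon N p) = 0" if "key N < key T2" for N
  proof -
    have "fst N < k1 \<or> snd N < k2" using key_less_comp[OF that] Tk by simp
    then show ?thesis unfolding mv using a1 a2 by auto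
  qed
  have amb: "v \<in> ambient S1 S2" unfolding ambient_def v_def by auto
  have "v \<in> dual S1 S2 (evcode S1 S2 L2)"
    unfolding dual_ip
  proof (intro conjI amb ballI)
    fix c assume "c \<in> evcode S1 S2 L2"
    then obtain P where P: "\<forall>N. P N \<noteq> 0 \<longrightarrow> N \<in> L2" "c = rep P"
      using code_rep[OF L2D] by blast
    have "ip v (rep P) = 0"
    proof (subst ip_rep, rule sum.neutral, rule ballI)
      fix N assume N: "N \<in> Delta s"
      show "P N * ip v (rep (\<lambda>M. if M = N then 1 else 0)) = 0"
      proof (cases "P N = 0")
        case False
        then have "key N < key T2" using P(1) L2 by blast
        then show ?thesis using ip_mono[OF N, of v] mv0 by simp
      qed simp
    qed
    then show "ip v c = 0" using P(2) by simp
  qed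
  moreover have "v \<notin> dual S1 S2 (evcode S1 S2 L1)"
  proof
    assume "v \<in> dual S1 S2 (evcode S1 S2 L1)"
    then have "\<forall>c\<in>evcode S1 S2 L1. ip v c = 0" unfolding dual_ip by blast
    moreover have "rep (\<lambda>M. if M = T2 then 1 else 0) \<in> evcode S1 S2 L1"
      using mono_in_code[OF _ L1D] T2in by blast
    ultimately have "ip v (rep (\<lambda>M. if M = T2 then 1 else 0)) = 0" by blast
    then have "(\<Sum>p\<in>S1\<times>S2. v p * mon T2 p) = 0" using ip_mono[OF T2, of v] by simp
    then show False unfolding mv using a1 a2 Tk by simp
  qed
  ultimately show ?thesis by blast
qed

lemma seg_attain:
  assumes kl: "(k,l) \<in> L1"
  shows "\<exists>c\<in>evcode S1 S2 L1. hweight S1 S2 c = (s - k) * (s - l) \<and> ((k,l) \<notin> L2 \<longrightarrow> c \<notin> evcode S1 S2 L2)"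
proof -
  have k: "k < s" "l < s" using kl L1D by (auto simp: Delta_def)
  obtain A where A: "A \<subseteq> S1" "card A = k" "finite A"
    using obtain_subset_with_card_n[of k S1] c1 k by auto
  obtain B where B: "B \<subseteq> S2" "card B = l" "finite B"
    using obtain_subset_with_card_n[of l S2] c2 k by auto
  obtain \<gamma> where g: "\<gamma> k = 1" "\<forall>x. (\<Prod>u\<in>A. x - u) = (\<Sum>t\<le>k. \<gamma> t * x ^ t)"
    using prod_lin_expand[OF A(3)] A(2) by auto
  obtain \<delta> where d: "\<delta> l = 1" "\<forall>x. (\<Prod>u\<in>B. x - u) = (\<Sum>t\<le>l. \<delta> t * x ^ t)"
    using prod_lin_expand[OF B(3)] B(2) by auto
  define P where "P N = (if fst N \<le> k \<and> snd N \<le> l then \<gamma> (fst N) * \<delta> (snd N) else 0)" for N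
  have box: "{..k} \<times> {..l} \<subseteq> Delta s" using k by (auto simp: Delta_def)
  have PL1: "\<forall>N. P N \<noteq> 0 \<longrightarrow> N \<in> L1"
  proof (intro allI impI)
    fix N assume "P N \<noteq> 0"
    then have N: "fst N \<le> k" "snd N \<le> l" unfolding P_def by (auto split: if_splits)
    then have "key N \<le> key (k,l)" by (intro box_key_le) auto
    also have "key (k,l) \<le> key T1" using kl L1 by auto
    moreover have "N \<in> Delta s" using N k by (cases N) (auto simp: Delta_def)
    ultimately show "N \<in> L1" using L1 by auto
  qed
  have cin: "rep P \<in> evcode S1 S2 L1" using code_rep[OF L1D] PL1 by blast
  have val: "(\<Sum>N\<in>Delta s. P N * mon N p) = (\<Prod>u\<in>A. fst p - u) * (\<Prod>u\<in>B. snd p - u)" for p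
  proof -
    have "(\<Sum>N\<in>Delta s. P N * mon N p) = (\<Sum>N\<in>{..k} \<times> {..l}. P N * mon N p)"
      using box finite_Delta by (intro sum.mono_neutral_right) (auto simp: P_def)
    also have "\<dots> = (\<Sum>t\<le>k. \<Sum>r\<le>l. (\<gamma> t * fst p ^ t) * (\<delta> r * snd p ^ r))"
      unfolding sum.cartesian_product by (rule sum.cong) (auto simp: P_def mon_def mult_ac split: prod.splits)
    also have "\<dots> = (\<Sum>t\<le>k. \<gamma> t * fst p ^ t) * (\<Sum>r\<le>l. \<delta> r * snd p ^ r)"
      by (simp add: sum_product)
    finally show ?thesis using g d by simp
  qed
  have "{p\<in>S1\<times>S2. (\<Sum>N\<in>Delta s. P N * mon N p) \<noteq> 0} = (S1 - A) \<times> (S2 - B)"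
    unfolding val using A(3) B(3) by (auto simp: prod_zero_iff)
  then have hw: "hweight S1 S2 (rep P) = (s - k) * (s - l)"
    unfolding hweight_rep using A B c1 c2 by (simp add: card_cartesian_product card_Diff_subset)
  have "(k,l) \<notin> L2 \<longrightarrow> rep P \<notin> evcode S1 S2 L2"
  proof (intro impI notI)
    assume nL2: "(k,l) \<notin> L2" and "rep P \<in> evcode S1 S2 L2"
    then obtain P' where P': "\<forall>N. P' N \<noteq> 0 \<longrightarrow> N \<in> L2" "rep P = rep P'"
      using code_rep[OF L2D] by blast
    have "\<forall>p\<in>S1\<times>S2. (\<Sum>N\<in>Delta s. (P N - P' N) * mon N p) = 0"
    proof
      fix p assume p: "p \<in> S1 \<times> S2"
      have "rep P p = rep P' p" using P'(2) by simp
      then have "(\<Sum>N\<in>Delta s. P N * mon N p) = (\<Sum>N\<in>Delta s. P' N * mon N p)"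
        using p unfolding rep_def by simp
      then show "(\<Sum>N\<in>Delta s. (P N - P' N) * mon N p) = 0"
        by (simp add: left_diff_distrib sum_subtractf)
    qed
    then have "\<forall>N\<in>Delta s. P N - P' N = 0" by (rule inj_eval)
    moreover have "(k,l) \<in> Delta s" using k by (auto simp: Delta_def)
    ultimately have "P (k,l) = P' (k,l)" by simp
    moreover have "P' (k,l) = 0" using P'(1) nL2 by blast
    moreover have "P (k,l) = 1" unfolding P_def using g d by simp
    ultimately show False by simp
  qed
  then show ?thesis using cin hw by blast
qed

end

lemma prod_ge:
  fixes A B u v :: nat
  assumes "A \<le> u" "A \<le> v" "u + v = A + B"
  shows "A * B \<le> u * v"
proof -
  obtain p where p: "u = A + p" using assms(1) le_Suc_ex by blast
  obtain q where q: "v = A + q" using assms(2) le_Suc_ex by blast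
  have B: "B = A + p + q" using assms(3) p q by simp
  have "(A + p) * (A + q) = A * (A + p + q) + p * q" by (simp add: algebra_simps)
  then show ?thesis unfolding p q B by linarith
qed

lemma prod_ge2:
  fixes a b s d :: nat
  assumes "a + b \<le> d" "d < s"
  shows "s * (s - d) \<le> (s - a) * (s - b)"
proof -
  obtain t where t: "s = a + b + t" using assms le_Suc_ex[of "a+b" s] by auto
  have "s - d \<le> t" using t assms by simp
  then have "s * (s - d) \<le> s * t" by simp
  also have "s * t \<le> (b + t) * (a + t)"
  proof -
    have "(b + t) * (a + t) = (a + b + t) * t + a * b" by (simp add: algebra_simps)
    then show ?thesis unfolding t by linarith
  qed
  also have "(b + t) * (a + t) = (s - a) * (s - b)" using t by simp
  finally show ?thesis .
qed

lemma prod_gt2: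
  fixes i j s :: nat
  assumes "1 \<le> i" "i \<le> j" "i + j < s"
  shows "s * (s - (i + j)) < (s - i) * (s - j)"
proof -
  obtain t where t: "s = i + j + t" using assms le_Suc_ex[of "i+j" s] by auto
  have "0 < i * j" using assms by simp
  have "(j + t) * (i + t) = (i + j + t) * t + i * j" by (simp add: algebra_simps)
  then have "(i + j + t) * t < (j + t) * (i + t)" using \<open>0 < i * j\<close> by linarith
  then show ?thesis using t by simp
qed

lemma prod_ge3:
  fixes u v d :: nat
  assumes "1 \<le> u" "1 \<le> v" "d + 2 \<le> u + v"
  shows "d + 1 \<le> u * v"
proof -
  obtain p where p: "u = 1 + p" using assms(1) le_Suc_ex by blast
  obtain q where q: "v = 1 + q" using assms(2) le_Suc_ex by blast
  have "(1 + p) * (1 + q) = 1 + p + q + p * q" by (simp add: algebra_simps)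
  then show ?thesis using assms(3) unfolding p q by linarith
qed

lemma key_between:
  assumes "key A \<le> key N" "key N \<le> key B" "fst A + snd A = d" "fst B + snd B = d"
  shows "fst N + snd N = d \<and> snd A \<le> snd N \<and> snd N \<le> snd B"
proof -
  have d: "fst N + snd N = d" using key_deg_mono[OF assms(1)] key_deg_mono[OF assms(2)] assms(3,4) by linarith
  have "\<not> snd N < snd A"
  proof
    assume "snd N < snd A"
    then have "deg_less N A" unfolding deg_less_def using d assms(3) by simp
    then show False using key_less_iff assms(1) by (simp add: not_less[symmetric])
  qed
  moreover have "\<not> snd B < snd N"
  proof
    assume "snd B < snd N"
    then have "deg_less B N" unfolding deg_less_def using d assms(4) by simp
    then show False using key_less_iff assms(2) by (simp add: not_less[symmetric])
  qed
  ultimately show ?thesis using d by simp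
qed

lemma key_in_between:
  assumes "fst N + snd N = d" "fst A + snd A = d" "fst B + snd B = d" "snd A \<le> snd N" "snd N \<le> snd B"
  shows "key A \<le> key N \<and> key N \<le> key B"
proof -
  have "deg_le A N" "deg_le N B" using assms unfolding deg_le_def deg_less_def by (cases A; cases N; cases B; auto)+
  then show ?thesis using key_le_iff by blast
qed

lemma card_diag:
  assumes "a \<le> b" "b \<le> d"
  shows "card ((\<lambda>t. (d - t, t)) ` {a..b}) = b - a + 1"
proof -
  have "inj_on (\<lambda>t. (d - t, t)) {a..b}" by (auto simp: inj_on_def)
  then show ?thesis using assms by (simp add: card_image)
qed

context grid
begin

lemma hweight_zero: "hweight S1 S2 (\<lambda>_. 0) = 0" unfolding hweight_def by simp

end

declare split_paired_All[simp del] split_paired_Ex[simp del]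

context grid
begin

lemma part1:
  fixes i j \<sigma> l :: nat
  assumes ij: "i + j = \<sigma>" "i \<le> j" "\<sigma> < s" "j + 1 = i + l"
  defines "L1 \<equiv> {N \<in> Delta s. deg_le N (i, j)}" and "L2 \<equiv> {N \<in> Delta s. deg_less N (j, i)}"
  shows "L2 \<subset> L1 \<and> L1 \<subseteq> Delta s \<and> card L1 - card L2 = l
        \<and> M1 S1 S2 (evcode S1 S2 L1) (evcode S1 S2 L2) = (s - i) * (s - j)
        \<and> M1 S1 S2 (dual S1 S2 (evcode S1 S2 L2)) (dual S1 S2 (evcode S1 S2 L1)) \<ge> (i + 1) * (j + 1)
        \<and> (l + 1 \<le> \<sigma> \<longrightarrow>
             min_dist S1 S2 (evcode S1 S2 L1) = s * (s - \<sigma>)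
             \<and> s * (s - \<sigma>) < M1 S1 S2 (evcode S1 S2 L1) (evcode S1 S2 L2))"
proof -
  have L1k: "L1 = {N \<in> Delta s. key N \<le> key (i, j)}" unfolding L1_def by (simp add: key_le_iff)
  have L2k: "L2 = {N \<in> Delta s. key N < key (j, i)}" unfolding L2_def by (simp add: key_less_iff)
  have ijD: "(i,j) \<in> Delta s" "(j,i) \<in> Delta s" using ij by (auto simp: Delta_def)
  have kji: "key (j,i) \<le> key (i,j)"
    using key_in_between[of "(i,j)" \<sigma> "(j,i)" "(i,j)"] ij by (simp add: add.commute)
  interpret S: seg S1 S2 s "(i,j)" "(j,i)" L1 L2
    by unfold_locales (use ijD kji L1k L2k in auto)
  have diff: "L1 - L2 = (\<lambda>t. (\<sigma> - t, t)) ` {i..j}"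
  proof
    show "L1 - L2 \<subseteq> (\<lambda>t. (\<sigma> - t, t)) ` {i..j}"
    proof
      fix N assume N: "N \<in> L1 - L2"
      then have "key (j,i) \<le> key N" "key N \<le> key (i,j)" "N \<in> Delta s" using L1k L2k by auto
      then have "fst N + snd N = \<sigma> \<and> i \<le> snd N \<and> snd N \<le> j"
        using key_between[of "(j,i)" N "(i,j)" \<sigma>] ij by (simp add: add.commute)
      then have "N = (\<sigma> - snd N, snd N)" "snd N \<in> {i..j}" by (auto simp: prod_eq_iff)
      then show "N \<in> (\<lambda>t. (\<sigma> - t, t)) ` {i..j}" by blast
    qed
  next
    show "(\<lambda>t. (\<sigma> - t, t)) ` {i..j} \<subseteq> L1 - L2"
    proof
      fix N assume "N \<in> (\<lambda>t. (\<sigma> - t, t)) ` {i..j}"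
      then obtain t where t: "t \<in> {i..j}" "N = (\<sigma> - t, t)" by blast
      have "key (j,i) \<le> key N \<and> key N \<le> key (i,j)"
        using key_in_between[of N \<sigma> "(j,i)" "(i,j)"] t ij by auto
      moreover have "N \<in> Delta s" using t ij by (auto simp: Delta_def)
      ultimately show "N \<in> L1 - L2" using L1k L2k by auto
    qed
  qed
  have fL2: "finite L2" using finite_Delta S.L2D finite_subset by blast
  have card: "card L1 - card L2 = l"
  proof -
    have "card L1 - card L2 = card (L1 - L2)" using card_Diff_subset[OF fL2 S.L21] by simp
    also have "\<dots> = j - i + 1" unfolding diff using ij by (intro card_diag) auto
    finally show ?thesis using ij by simp
  qed
  have sub: "L2 \<subset> L1" using S.L21 S.T2in by blast
  have ijL1: "(i,j) \<in> L1" using ijD L1k by simp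
  have ijL2: "(i,j) \<notin> L2" using L2k kji by simp
  obtain c0 where c0: "c0 \<in> evcode S1 S2 L1" "hweight S1 S2 c0 = (s - i) * (s - j)"
      "c0 \<notin> evcode S1 S2 L2"
    using S.seg_attain[OF ijL1] ijL2 by blast
  have lowp: "\<forall>c\<in>evcode S1 S2 L1 - evcode S1 S2 L2. (s - i) * (s - j) \<le> hweight S1 S2 c"
  proof
    fix c assume c: "c \<in> evcode S1 S2 L1 - evcode S1 S2 L2"
    obtain m where m: "m \<in> L1 - L2" "(s - fst m) * (s - snd m) \<le> hweight S1 S2 c"
      using S.seg_primal[OF c] by blast
    then obtain t where t: "t \<in> {i..j}" "m = (\<sigma> - t, t)" using diff by blast
    have "(s - j) * (s - i) \<le> (s - (\<sigma> - t)) * (s - t)"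
      by (rule prod_ge) (use t ij in auto)
    then show "(s - i) * (s - j) \<le> hweight S1 S2 c" using m t by (simp add: mult.commute)
  qed
  have M1p: "M1 S1 S2 (evcode S1 S2 L1) (evcode S1 S2 L2) = (s - i) * (s - j)"
    using M1_eq[of c0] c0 lowp by blast
  have lowd: "\<forall>v\<in>dual S1 S2 (evcode S1 S2 L2) - dual S1 S2 (evcode S1 S2 L1). (i + 1) * (j + 1) \<le> hweight S1 S2 v"
  proof
    fix v assume v: "v \<in> dual S1 S2 (evcode S1 S2 L2) - dual S1 S2 (evcode S1 S2 L1)"
    obtain m where m: "m \<in> L1 - L2" "(fst m + 1) * (snd m + 1) \<le> hweight S1 S2 v"
      using S.seg_dual[OF v] by blast
    then obtain t where t: "t \<in> {i..j}" "m = (\<sigma> - t, t)" using diff by blast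
    have "(i + 1) * (j + 1) \<le> (\<sigma> - t + 1) * (t + 1)"
      by (rule prod_ge) (use t ij in auto)
    then show "(i + 1) * (j + 1) \<le> hweight S1 S2 v" using m t by simp
  qed
  have M1d: "(i + 1) * (j + 1) \<le> M1 S1 S2 (dual S1 S2 (evcode S1 S2 L2)) (dual S1 S2 (evcode S1 S2 L1))"
    using M1_ge[OF S.seg_dual_ne lowd] .
  have mind: "l + 1 \<le> \<sigma> \<longrightarrow>
             min_dist S1 S2 (evcode S1 S2 L1) = s * (s - \<sigma>)
             \<and> s * (s - \<sigma>) < M1 S1 S2 (evcode S1 S2 L1) (evcode S1 S2 L2)"
  proof
    assume l\<sigma>: "l + 1 \<le> \<sigma>"
    then have i1: "1 \<le> i" using ij by linarith
    have s0L1: "(\<sigma>, 0) \<in> L1"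
    proof -
      have "key (\<sigma>, 0) \<le> key (i,j) \<and> key (i,j) \<le> key (i,j)"
        using key_in_between[of "(i,j)" \<sigma> "(\<sigma>,0)" "(i,j)"] ij by simp
      moreover have "(\<sigma>, 0) \<in> Delta s" using ij by (auto simp: Delta_def)
      ultimately show ?thesis using L1k by simp
    qed
    obtain c1 where c1: "c1 \<in> evcode S1 S2 L1" "hweight S1 S2 c1 = (s - \<sigma>) * (s - 0)"
      using S.seg_attain[OF s0L1] by blast
    have "c1 \<noteq> (\<lambda>_. 0)"
    proof
      assume "c1 = (\<lambda>_. 0)"
      then have "hweight S1 S2 c1 = 0" using hweight_zero by simp
      then show False using c1 ij by simp
    qed
    then have c1': "c1 \<in> evcode S1 S2 L1 - {\<lambda>_. 0}" using c1 by blast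
    have lowm: "\<forall>c\<in>evcode S1 S2 L1 - {\<lambda>_. 0}. s * (s - \<sigma>) \<le> hweight S1 S2 c"
    proof
      fix c assume c: "c \<in> evcode S1 S2 L1 - {\<lambda>_. 0}"
      obtain m where m: "m \<in> L1" "(s - fst m) * (s - snd m) \<le> hweight S1 S2 c"
        using S.seg_min[of c] c by blast
      have "fst m + snd m \<le> \<sigma>" using key_deg_mono[of m "(i,j)"] m L1k ij by auto
      then have "s * (s - \<sigma>) \<le> (s - fst m) * (s - snd m)" using prod_ge2 ij by blast
      then show "s * (s - \<sigma>) \<le> hweight S1 S2 c" using m by linarith
    qed
    have "min_dist S1 S2 (evcode S1 S2 L1) = s * (s - \<sigma>)"
      using min_dist_eq[OF c1' _ lowm] c1 by (simp add: mult.commute)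
    moreover have "s * (s - \<sigma>) < (s - i) * (s - j)" using prod_gt2[of i j s] i1 ij by simp
    ultimately show "min_dist S1 S2 (evcode S1 S2 L1) = s * (s - \<sigma>)
             \<and> s * (s - \<sigma>) < M1 S1 S2 (evcode S1 S2 L1) (evcode S1 S2 L2)" using M1p by simp
  qed
  show ?thesis using sub S.L1D card M1p M1d mind by blast
qed

lemma part2:
  fixes i j \<sigma> l :: nat
  assumes ij: "i + j = \<sigma>" "i \<le> j" "\<sigma> < s" "j + 1 = i + l"
  shows "\<exists>L1 L2. L2 \<subset> L1 \<and> L1 \<subseteq> Delta s \<and> card L1 - card L2 = l
        \<and> M1 S1 S2 (evcode S1 S2 L1) (evcode S1 S2 L2) = (i + 1) * (j + 1)
        \<and> M1 S1 S2 (dual S1 S2 (evcode S1 S2 L2)) (dual S1 S2 (evcode S1 S2 L1)) \<ge> (s - i) * (s - j)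
        \<and> (l + 1 \<le> \<sigma> \<longrightarrow>
             min_dist S1 S2 (evcode S1 S2 L1) = \<sigma> + 1
             \<and> \<sigma> + 1 < M1 S1 S2 (evcode S1 S2 L1) (evcode S1 S2 L2))"
proof -
  define a where "a = s - 1 - j"
  define b where "b = s - 1 - i"
  define D where "D = a + b"
  have ab: "a + j + 1 = s" "b + i + 1 = s" "a \<le> b" "D + \<sigma> + 2 = 2 * s"
    using ij unfolding a_def b_def D_def by auto
  define L1 where "L1 = {N \<in> Delta s. key N \<le> key (a, b)}"
  define L2 where "L2 = {N \<in> Delta s. key N < key (b, a)}"
  have abD: "(a,b) \<in> Delta s" "(b,a) \<in> Delta s" using ab by (auto simp: Delta_def)
  have kba: "key (b,a) \<le> key (a,b)"
    using key_in_between[of "(a,b)" D "(b,a)" "(a,b)"] ab unfolding D_def by (simp add: add.commute)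
  interpret S: seg S1 S2 s "(a,b)" "(b,a)" L1 L2
    by unfold_locales (use abD kba L1_def L2_def in auto)
  have diff: "L1 - L2 = (\<lambda>t. (D - t, t)) ` {a..b}"
  proof
    show "L1 - L2 \<subseteq> (\<lambda>t. (D - t, t)) ` {a..b}"
    proof
      fix N assume N: "N \<in> L1 - L2"
      then have "key (b,a) \<le> key N" "key N \<le> key (a,b)" "N \<in> Delta s" using L1_def L2_def by auto
      then have "fst N + snd N = D \<and> a \<le> snd N \<and> snd N \<le> b"
        using key_between[of "(b,a)" N "(a,b)" D] unfolding D_def by (simp add: add.commute)
      then have "N = (D - snd N, snd N)" "snd N \<in> {a..b}" by (auto simp: prod_eq_iff)
      then show "N \<in> (\<lambda>t. (D - t, t)) ` {a..b}" by blast
    qed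
  next
    show "(\<lambda>t. (D - t, t)) ` {a..b} \<subseteq> L1 - L2"
    proof
      fix N assume "N \<in> (\<lambda>t. (D - t, t)) ` {a..b}"
      then obtain t where t: "t \<in> {a..b}" "N = (D - t, t)" by blast
      have "key (b,a) \<le> key N \<and> key N \<le> key (a,b)"
        using key_in_between[of N D "(b,a)" "(a,b)"] t unfolding D_def by auto
      moreover have "N \<in> Delta s" using t ab unfolding D_def by (auto simp: Delta_def)
      ultimately show "N \<in> L1 - L2" using L1_def L2_def by auto
    qed
  qed
  have fL2: "finite L2" using finite_Delta S.L2D finite_subset by blast
  have card: "card L1 - card L2 = l"
  proof -
    have "card L1 - card L2 = card (L1 - L2)" using card_Diff_subset[OF fL2 S.L21] by simp
    also have "\<dots> = b - a + 1" unfolding diff using ab unfolding D_def by (intro card_diag) auto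
    finally show ?thesis using ab ij by simp
  qed
  have sub: "L2 \<subset> L1" using S.L21 S.T2in by blast
  have abL1: "(a,b) \<in> L1" using abD L1_def by simp
  have abL2: "(a,b) \<notin> L2" using L2_def kba by simp
  obtain c0 where c0: "c0 \<in> evcode S1 S2 L1" "hweight S1 S2 c0 = (s - a) * (s - b)"
      "c0 \<notin> evcode S1 S2 L2"
    using S.seg_attain[OF abL1] abL2 by blast
  have "s - a = j + 1" "s - b = i + 1" using ab by auto
  then have hw0: "(s - a) * (s - b) = (i + 1) * (j + 1)" by (simp add: mult.commute)
  have lowp: "\<forall>c\<in>evcode S1 S2 L1 - evcode S1 S2 L2. (i + 1) * (j + 1) \<le> hweight S1 S2 c"
  proof
    fix c assume c: "c \<in> evcode S1 S2 L1 - evcode S1 S2 L2"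
    obtain m where m: "m \<in> L1 - L2" "(s - fst m) * (s - snd m) \<le> hweight S1 S2 c"
      using S.seg_primal[OF c] by blast
    then obtain t where t: "t \<in> {a..b}" "m = (D - t, t)" using diff by blast
    have "(i + 1) * (j + 1) \<le> (s - (D - t)) * (s - t)"
      by (rule prod_ge) (use t ab ij in \<open>auto simp: D_def\<close>)
    then show "(i + 1) * (j + 1) \<le> hweight S1 S2 c" using m t by simp
  qed
  have M1p: "M1 S1 S2 (evcode S1 S2 L1) (evcode S1 S2 L2) = (i + 1) * (j + 1)"
    using M1_eq[of c0] c0 lowp hw0 by simp
  have lowd: "\<forall>v\<in>dual S1 S2 (evcode S1 S2 L2) - dual S1 S2 (evcode S1 S2 L1). (s - i) * (s - j) \<le> hweight S1 S2 v"
  proof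
    fix v assume v: "v \<in> dual S1 S2 (evcode S1 S2 L2) - dual S1 S2 (evcode S1 S2 L1)"
    obtain m where m: "m \<in> L1 - L2" "(fst m + 1) * (snd m + 1) \<le> hweight S1 S2 v"
      using S.seg_dual[OF v] by blast
    then obtain t where t: "t \<in> {a..b}" "m = (D - t, t)" using diff by blast
    have "(s - j) * (s - i) \<le> (D - t + 1) * (t + 1)"
      by (rule prod_ge) (use t ab ij in \<open>auto simp: D_def\<close>)
    then show "(s - i) * (s - j) \<le> hweight S1 S2 v" using m t by (simp add: mult.commute)
  qed
  have M1d: "(s - i) * (s - j) \<le> M1 S1 S2 (dual S1 S2 (evcode S1 S2 L2)) (dual S1 S2 (evcode S1 S2 L1))"
    using M1_ge[OF S.seg_dual_ne lowd] .
  have mind: "l + 1 \<le> \<sigma> \<longrightarrow>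
             min_dist S1 S2 (evcode S1 S2 L1) = \<sigma> + 1
             \<and> \<sigma> + 1 < M1 S1 S2 (evcode S1 S2 L1) (evcode S1 S2 L2)"
  proof
    assume l\<sigma>: "l + 1 \<le> \<sigma>"
    then have i1: "1 \<le> i" using ij by linarith
    have eL1: "(s - 1, s - 1 - \<sigma>) \<in> L1"
    proof -
      have "key (s - 1, s - 1 - \<sigma>) \<le> key (a,b) \<and> key (a,b) \<le> key (a,b)"
        using key_in_between[of "(a,b)" D "(s - 1, s - 1 - \<sigma>)" "(a,b)"] ab ij unfolding D_def by auto
      moreover have "(s - 1, s - 1 - \<sigma>) \<in> Delta s" using ab ij by (auto simp: Delta_def)
      ultimately show ?thesis using L1_def by simp
    qed
    obtain c1 where c1: "c1 \<in> evcode S1 S2 L1" "hweight S1 S2 c1 = (s - (s - 1)) * (s - (s - 1 - \<sigma>))"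
      using S.seg_attain[OF eL1] by blast
    have hw1: "(s - (s - 1)) * (s - (s - 1 - \<sigma>)) = \<sigma> + 1" using ab ij by simp
    have hwc1: "hweight S1 S2 c1 = \<sigma> + 1" using c1 hw1 by simp
    have "c1 \<noteq> (\<lambda>_. 0)"
    proof
      assume "c1 = (\<lambda>_. 0)"
      then have "hweight S1 S2 c1 = 0" using hweight_zero by simp
      then show False using hwc1 by simp
    qed
    then have c1': "c1 \<in> evcode S1 S2 L1 - {\<lambda>_. 0}" using c1 by blast
    have lowm: "\<forall>c\<in>evcode S1 S2 L1 - {\<lambda>_. 0}. \<sigma> + 1 \<le> hweight S1 S2 c"
    proof
      fix c assume c: "c \<in> evcode S1 S2 L1 - {\<lambda>_. 0}"
      obtain m where m: "m \<in> L1" "(s - fst m) * (s - snd m) \<le> hweight S1 S2 c"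
        using S.seg_min[of c] c by blast
      have "fst m + snd m \<le> D" using key_deg_mono[of m "(a,b)"] m L1_def unfolding D_def by auto
      moreover have "fst m < s" "snd m < s" using m S.L1D by (auto simp: Delta_def)
      ultimately have "\<sigma> + 1 \<le> (s - fst m) * (s - snd m)" using ab by (intro prod_ge3) auto
      then show "\<sigma> + 1 \<le> hweight S1 S2 c" using m by linarith
    qed
    have "min_dist S1 S2 (evcode S1 S2 L1) = \<sigma> + 1"
      using min_dist_eq[OF c1' _ lowm] c1 hw1 by simp
    moreover have "\<sigma> + 1 < (i + 1) * (j + 1)"
    proof -
      have "(i + 1) * (j + 1) = i * j + (i + j) + 1" by (simp add: algebra_simps)
      moreover have "0 < i * j" using i1 ij by simp
      ultimately show ?thesis using ij by linarith
    qed
    ultimately show "min_dist S1 S2 (evcode S1 S2 L1) = \<sigma> + 1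
             \<and> \<sigma> + 1 < M1 S1 S2 (evcode S1 S2 L1) (evcode S1 S2 L2)" using M1p by simp
  qed
  show ?thesis using sub S.L1D card M1p M1d mind by blast
qed

end

theorem mainTheorem6:
  fixes S1 S2 :: "'a::{field, finite} set"
    and s \<sigma> l :: nat
  assumes "card S1 = s" and "card S2 = s"
    and "\<sigma> < s"
    and "0 < l" and "l \<le> \<sigma> + 1"
    and "even l \<longleftrightarrow> odd \<sigma>"
  shows
   "(let i = (\<sigma> + 1 - l) div 2; j = (\<sigma> + l - 1) div 2;
         L1 = {N \<in> Delta s. deg_le N (i, j)};
         L2 = {N \<in> Delta s. deg_less N (j, i)}
     in L2 \<subset> L1 \<and> L1 \<subseteq> Delta s \<and> card L1 - card L2 = l
        \<and> M1 S1 S2 (evcode S1 S2 L1) (evcode S1 S2 L2)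
            = (s - (\<sigma> + 1 - l) div 2) * (s - (\<sigma> + l - 1) div 2)
        \<and> M1 S1 S2 (dual S1 S2 (evcode S1 S2 L2)) (dual S1 S2 (evcode S1 S2 L1))
            \<ge> ((\<sigma> + 3 - l) div 2) * ((\<sigma> + l + 1) div 2)
        \<and> (l + 1 \<le> \<sigma> \<longrightarrow>
             min_dist S1 S2 (evcode S1 S2 L1) = s * (s - \<sigma>)
             \<and> s * (s - \<sigma>) < M1 S1 S2 (evcode S1 S2 L1) (evcode S1 S2 L2)))
   \<and> (\<exists>L1 L2. L2 \<subset> L1 \<and> L1 \<subseteq> Delta s \<and> card L1 - card L2 = l
        \<and> M1 S1 S2 (evcode S1 S2 L1) (evcode S1 S2 L2)
            = ((\<sigma> + 3 - l) div 2) * ((\<sigma> + l + 1) div 2)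
        \<and> M1 S1 S2 (dual S1 S2 (evcode S1 S2 L2)) (dual S1 S2 (evcode S1 S2 L1))
            \<ge> (s - (\<sigma> + 1 - l) div 2) * (s - (\<sigma> + l - 1) div 2)
        \<and> (l + 1 \<le> \<sigma> \<longrightarrow>
             min_dist S1 S2 (evcode S1 S2 L1) = \<sigma> + 1
             \<and> \<sigma> + 1 < M1 S1 S2 (evcode S1 S2 L1) (evcode S1 S2 L2)))"
proof -
  interpret grid S1 S2 s using assms by unfold_locales auto
  define i where "i = (\<sigma> + 1 - l) div 2"
  define j where "j = (\<sigma> + l - 1) div 2"
  have par: "i + j = \<sigma>" "i \<le> j" "j + 1 = i + l" "(\<sigma> + 3 - l) div 2 = i + 1" "(\<sigma> + l + 1) div 2 = j + 1"
    unfolding i_def j_def using assms(4,5,6) by presburger+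
  note P1 = part1[OF par(1,2) assms(3) par(3)]
  note P2 = part2[OF par(1,2) assms(3) par(3)]
  show ?thesis
    unfolding Let_def i_def[symmetric] j_def[symmetric] par(4,5)
    using P1 P2 by blast
qed

end
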